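(* Let $b>\frac12$. There is $C>0$ such that for every bounded interval $I\subset\mathbb{R}$ and all $u,v\in X^{0,b}$, \[ \|I_x^{1/2}I_{x,-}^{1/2}(P_{y,I}u,v)\|_{L^2_{t,x,y}}+\|I_x^{1/2}I_{x,-}^{1/2}(u,P_{y,I}v)\|_{L^2_{t,x,y}}+\|P_{y,I}I_x^{1/2}I_{x,-}^{1/2}(u,v)\|_{L^2_{t,x,y}}\le C|I|^{1/2}\|u\|_{0,b}\|v\|_{0,b}, \] where $|I|$ is the length of $I$. The same estimates hold with the roles of $x$ and $y$ (and of $\xi$ and $\eta$) interchanged.
   Context: Notation: $\langle a\rangle=(1+|a|^2)^{1/2}$; $(\tau,\xi,\eta)$ are the Fourier variables dual to $(t,x,y)$, $\widehat u$ is the space-time Fourier transform. $X^{s,b}$ is the space of tempered distributions $u$ on $\mathbb{R}\times\mathbb{R}^2$ with $\widehat u\in L^2_{loc}$ and $\|u\|_{s,b}=\|\langle\tau-\xi^3-\eta^3\rangle^b\langle(\xi,\eta)\rangle^s\widehat u\|_{L^2_{\tau\xi\eta}}<\infty$. $I_x^{1/2}$ is the Fourier multiplier with symbol $|\xi|^{1/2}$; $P_{y,I}$ is the Fourier multiplier with symbol $\chi_{\{\eta\in I\}}$. $I_{x,-}^{1/2}$ is the bilinear operator acting in the space variables by $\mathcal F_{x,y}(I_{x,-}^{1/2}(f_1,f_2))(\xi,\eta)=\int_{\xi_1+\xi_2=\xi,\ \eta_1+\eta_2=\eta}|\xi_1-\xi_2|^{1/2}\widehat{f_1}(\xi_1,\eta_1)\widehat{f_2}(\xi_2,\eta_2)\,d\xi_1d\eta_1$.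 With $x,y$ interchanged, $I_y^{1/2}$ has symbol $|\eta|^{1/2}$, $I_{y,-}^{1/2}$ has symbol $|\eta_1-\eta_2|^{1/2}$ and $P_{x,I}$ has symbol $\chi_{\{\xi\in I\}}$. *)

theory Defs
  imports "HOL-Analysis.Analysis"
begin

text \<open>All objects are described on the Fourier side: a space-time function u is
represented by its space-time Fourier transform f = u-hat, a function of
zeta = (tau, xi, eta) :: real * real * real.  By Plancherel, L2 norms in
(t,x,y) coincide (up to a fixed normalising constant) with L2 norms in
(tau,xi,eta); products in (t,x,y) become convolutions.\<close>

definition jb :: "real \<Rightarrow> real" where
  "jb a = sqrt (1 + a\<^sup>2)"

definition jb2 :: "real \<Rightarrow> real \<Rightarrow> real" where
  "jb2 \<xi> \<eta> = sqrt (1 + \<xi>\<^sup>2 + \<eta>\<^sup>2)"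

definition Xsb_weight :: "real \<Rightarrow> real \<Rightarrow> real \<times> real \<times> real \<Rightarrow> real" where
  "Xsb_weight s b \<zeta> = (case \<zeta> of (\<tau>, \<xi>, \<eta>) \<Rightarrow>
      jb (\<tau> - \<xi>^3 - \<eta>^3) powr b * jb2 \<xi> \<eta> powr s)"

definition Xsb_sq :: "real \<Rightarrow> real \<Rightarrow> (real \<times> real \<times> real \<Rightarrow> complex) \<Rightarrow> ennreal" where
  "Xsb_sq s b f = (\<integral>\<^sup>+ \<zeta>. ennreal ((Xsb_weight s b \<zeta> * cmod (f \<zeta>))\<^sup>2) \<partial>lborel)"

definition in_Xsb :: "real \<Rightarrow> real \<Rightarrow> (real \<times> real \<times> real \<Rightarrow> complex) \<Rightarrow> bool" where
  "in_Xsb s b f \<longleftrightarrow> f \<in> borel_measurable lborel \<and> Xsb_sq s b f < \<infinity>"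

definition Xsb_norm :: "real \<Rightarrow> real \<Rightarrow> (real \<times> real \<times> real \<Rightarrow> complex) \<Rightarrow> real" where
  "Xsb_norm s b f = sqrt (enn2real (Xsb_sq s b f))"

definition l2sq :: "(real \<times> real \<times> real \<Rightarrow> complex) \<Rightarrow> ennreal" where
  "l2sq h = (\<integral>\<^sup>+ \<zeta>. ennreal ((cmod (h \<zeta>))\<^sup>2) \<partial>lborel)"

definition l2norm :: "(real \<times> real \<times> real \<Rightarrow> complex) \<Rightarrow> real" where
  "l2norm h = sqrt (enn2real (l2sq h))"

definition Py_hat :: "real set \<Rightarrow> (real \<times> real \<times> real \<Rightarrow> complex) \<Rightarrow> real \<times> real \<times> real \<Rightarrow> complex" where
  "Py_hat I f \<zeta> = (case \<zeta> of (\<tau>, \<xi>, \<eta>) \<Rightarrow> if \<eta> \<in> I then f \<zeta> else 0)"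

definition Px_hat :: "real set \<Rightarrow> (real \<times> real \<times> real \<Rightarrow> complex) \<Rightarrow> real \<times> real \<times> real \<Rightarrow> complex" where
  "Px_hat I f \<zeta> = (case \<zeta> of (\<tau>, \<xi>, \<eta>) \<Rightarrow> if \<xi> \<in> I then f \<zeta> else 0)"

text \<open>Fourier side of I_x^{1/2} I_{x,-}^{1/2}(u,v): at zeta = (tau,xi,eta) it is
  |xi|^{1/2} * integral over zeta1 = (tau1,xi1,eta1) of
  |xi1 - xi2|^{1/2} f(zeta1) g(zeta - zeta1),  with xi2 = xi - xi1.\<close>
definition bilx_integrand ::
  "(real \<times> real \<times> real \<Rightarrow> complex) \<Rightarrow> (real \<times> real \<times> real \<Rightarrow> complex) \<Rightarrow>
   real \<times> real \<times> real \<Rightarrow> real \<times> real \<times> real \<Rightarrow> complex" where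
  "bilx_integrand f g \<zeta> \<zeta>1 =
     complex_of_real (\<bar>fst (snd \<zeta>1) - (fst (snd \<zeta>) - fst (snd \<zeta>1))\<bar> powr (1/2))
       * f \<zeta>1 * g (\<zeta> - \<zeta>1)"

definition bilx_hat ::
  "(real \<times> real \<times> real \<Rightarrow> complex) \<Rightarrow> (real \<times> real \<times> real \<Rightarrow> complex) \<Rightarrow>
   real \<times> real \<times> real \<Rightarrow> complex" where
  "bilx_hat f g \<zeta> = complex_of_real (\<bar>fst (snd \<zeta>)\<bar> powr (1/2))
       * (\<integral> \<zeta>1. bilx_integrand f g \<zeta> \<zeta>1 \<partial>lborel)"

definition bilx_defined ::
  "(real \<times> real \<times> real \<Rightarrow> complex) \<Rightarrow> (real \<times> real \<times> real \<Rightarrow> complex) \<Rightarrow> bool" where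
  "bilx_defined f g \<longleftrightarrow> (AE \<zeta> in lborel. integrable lborel (bilx_integrand f g \<zeta>))"

definition bily_integrand ::
  "(real \<times> real \<times> real \<Rightarrow> complex) \<Rightarrow> (real \<times> real \<times> real \<Rightarrow> complex) \<Rightarrow>
   real \<times> real \<times> real \<Rightarrow> real \<times> real \<times> real \<Rightarrow> complex" where
  "bily_integrand f g \<zeta> \<zeta>1 =
     complex_of_real (\<bar>snd (snd \<zeta>1) - (snd (snd \<zeta>) - snd (snd \<zeta>1))\<bar> powr (1/2))
       * f \<zeta>1 * g (\<zeta> - \<zeta>1)"

definition bily_hat ::
  "(real \<times> real \<times> real \<Rightarrow> complex) \<Rightarrow> (real \<times> real \<times> real \<Rightarrow> complex) \<Rightarrow>
   real \<times> real \<times> real \<Rightarrow> complex" where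
  "bily_hat f g \<zeta> = complex_of_real (\<bar>snd (snd \<zeta>)\<bar> powr (1/2))
       * (\<integral> \<zeta>1. bily_integrand f g \<zeta> \<zeta>1 \<partial>lborel)"

definition bily_defined ::
  "(real \<times> real \<times> real \<Rightarrow> complex) \<Rightarrow> (real \<times> real \<times> real \<Rightarrow> complex) \<Rightarrow> bool" where
  "bily_defined f g \<longleftrightarrow> (AE \<zeta> in lborel. integrable lborel (bily_integrand f g \<zeta>))"

definition bounded_interval :: "real set \<Rightarrow> real \<Rightarrow> real \<Rightarrow> bool" where
  "bounded_interval I a c \<longleftrightarrow> a \<le> c \<and> {a<..<c} \<subseteq> I \<and> I \<subseteq> {a..c}"

end

theory Submission
  imports Defs "HOL-Analysis.Analysis"
begin

lemma jb_ge1: "jb s \<ge> 1"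
  unfolding jb_def by (simp add: real_sqrt_ge_one)
lemma jb_pos: "jb s > 0"
  using jb_ge1[of s] by linarith
lemma jb_ge_abs: "jb s \<ge> \<bar>s\<bar>"
  unfolding jb_def by (metis real_sqrt_abs real_sqrt_le_mono add_le_cancel_right le_add_same_cancel2 zero_le_one)
lemma jb_minus[simp]: "jb (- s) = jb s"
  unfolding jb_def by simp
lemma jb_meas[measurable]: "jb \<in> borel_measurable borel"
  unfolding jb_def by measurable

lemma jb_powr_le1: "\<beta> \<ge> 0 \<Longrightarrow> jb s powr (-\<beta>) \<le> 1"
  using jb_ge1[of s] by (simp add: powr_minus_divide ge_one_powr_ge_zero)

lemma int_pos_tail:
  assumes "\<beta> > 1"
  shows "(\<integral>\<^sup>+s. ennreal (s powr (-\<beta>)) * indicator {1..} s \<partial>lborel) = ennreal (1 / (\<beta> - 1))"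
proof -
  have "(\<integral>\<^sup>+s. ennreal (s powr (-\<beta>)) * indicator {1..} s \<partial>lborel) = 0 - (- (1 powr (1-\<beta>)) / (\<beta> - 1))"
  proof (rule nn_integral_FTC_atLeast[where F="\<lambda>s. - (s powr (1-\<beta>)) / (\<beta> - 1)" and T=0])
    show "(\<lambda>s. s powr (-\<beta>)) \<in> borel_measurable borel" by measurable
    fix x :: real assume x: "1 \<le> x"
    show "0 \<le> x powr (-\<beta>)" by simp
    have "((\<lambda>s. s powr (1 - \<beta>)) has_real_derivative (1-\<beta>) * x powr (1 - \<beta> - 1)) (at x)"
      using x by (intro has_real_derivative_powr) auto  
    then have "((\<lambda>s. - (s powr (1-\<beta>)) / (\<beta> - 1)) has_real_derivative - ((1-\<beta>) * x powr (1 - \<beta> - 1)) / (\<beta> - 1)) (at x)"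
      by (intro DERIV_cdivide DERIV_minus)
    moreover have "- ((1-\<beta>) * x powr (1 - \<beta> - 1)) / (\<beta> - 1) = x powr (-\<beta>)"
      using assms by (simp add: field_simps)
    ultimately show "((\<lambda>s. - (s powr (1-\<beta>)) / (\<beta> - 1)) has_real_derivative x powr (-\<beta>)) (at x)" by simp
  next
    have "((\<lambda>s::real. s powr (1-\<beta>)) \<longlongrightarrow> 0) at_top"
      using assms by (intro tendsto_neg_powr filterlim_ident) auto
    then have "((\<lambda>s::real. - (s powr (1-\<beta>)) / (\<beta> - 1)) \<longlongrightarrow> - 0 / (\<beta> - 1)) at_top"
      by (intro tendsto_divide tendsto_minus) (use assms in auto)
    then show "((\<lambda>s::real. - (s powr (1-\<beta>)) / (\<beta> - 1)) \<longlongrightarrow> 0) at_top" by simp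
  qed
  also have "0 - (- (1 powr (1-\<beta>)) / (\<beta> - 1)) = 1 / (\<beta> - 1)" by simp
  finally show ?thesis .
qed

lemma nn_integral_reflect:
  fixes h :: "real \<Rightarrow> ennreal"
  assumes [measurable]: "h \<in> borel_measurable borel"
  shows "(\<integral>\<^sup>+s. h (c - s) \<partial>lborel) = (\<integral>\<^sup>+s. h s \<partial>lborel)"
  using nn_integral_real_affine[of h "-1" c] by simp

lemma nn_integral_shift:
  fixes h :: "real \<Rightarrow> ennreal"
  assumes [measurable]: "h \<in> borel_measurable borel"
  shows "(\<integral>\<^sup>+s. h (s + c) \<partial>lborel) = (\<integral>\<^sup>+s. h s \<partial>lborel)"
  using nn_integral_real_affine[of h "1" c] by (simp add: add.commute)

lemma ennreal_le3a: "(a::ennreal) \<le> a + b + c"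
  by (simp add: add.assoc add_increasing2)
lemma ennreal_le3b: "(b::ennreal) \<le> a + b + c"
  by (simp add: add_increasing add_increasing2)
lemma ennreal_le3c: "(c::ennreal) \<le> a + b + c"
  by (simp add: add_increasing)

definition Cb :: "real \<Rightarrow> ennreal" where
  "Cb \<beta> = (\<integral>\<^sup>+s. ennreal (jb s powr (-\<beta>)) \<partial>lborel)"


lemma Cb_finite:
  assumes "\<beta> > 1"
  shows "Cb \<beta> < \<infinity>"
proof -
  let ?t = "\<lambda>s::real. ennreal (s powr (-\<beta>)) * indicator {1..} s"
  have le: "ennreal (jb s powr (-\<beta>)) \<le> indicator {-1..1} s + ?t s + ?t (0 - s)" for s
  proof (cases "\<bar>s\<bar> \<le> 1")
    case True
    then have "ennreal (jb s powr (-\<beta>)) \<le> indicator {-1..1} s"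
      using jb_powr_le1[of \<beta> s] assms by (auto simp: indicator_def)
    then show ?thesis by (rule order_trans) (rule ennreal_le3a)
  next
    case False
    show ?thesis
    proof (cases "s > 1")
      case True
      have "jb s powr (-\<beta>) \<le> s powr (-\<beta>)"
        using True jb_ge_abs[of s] assms by (intro powr_mono2') auto
      then have "ennreal (jb s powr (-\<beta>)) \<le> ?t s" using True by (auto simp: indicator_def)
      then show ?thesis by (rule order_trans) (rule ennreal_le3b)
    next
      case False2: False
      then have s: "-s \<ge> 1" using False by auto
      have "jb s powr (-\<beta>) \<le> (-s) powr (-\<beta>)"
        using s jb_ge_abs[of s] assms by (intro powr_mono2') auto
      then have "ennreal (jb s powr (-\<beta>)) \<le> ?t (0 - s)" using s by (auto simp: indicator_def)
      then show ?thesis by (rule order_trans) (rule ennreal_le3c)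
    qed
  qed
  have "Cb \<beta> \<le> (\<integral>\<^sup>+s. indicator {-1..1} s + ?t s + ?t (0 - s) \<partial>lborel)"
    unfolding Cb_def by (intro nn_integral_mono le)
  also have "\<dots> = (\<integral>\<^sup>+s. indicator {-1..1::real} s \<partial>lborel) + (\<integral>\<^sup>+s. ?t s \<partial>lborel) + (\<integral>\<^sup>+s. ?t (0 - s) \<partial>lborel)"
  proof -
    have m1: "(\<lambda>s::real. ennreal (s powr (-\<beta>)) * indicator {1..} s) \<in> borel_measurable lborel" by measurable
    have m2: "(\<lambda>s::real. ennreal ((0 - s) powr (-\<beta>)) * indicator {1..} (0 - s)) \<in> borel_measurable lborel" by measurable
    have m0: "(\<lambda>s::real. indicator {-1..1} s :: ennreal) \<in> borel_measurable lborel" by measurable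
    show ?thesis
      by (rule trans[OF nn_integral_add[OF borel_measurable_add[OF m0 m1] m2]], rule arg_cong2[where f="(+)", OF nn_integral_add[OF m0 m1] refl])
  qed
  also have "(\<integral>\<^sup>+s. ?t (0 - s) \<partial>lborel) = (\<integral>\<^sup>+s. ?t s \<partial>lborel)"
    by (rule nn_integral_reflect) measurable
  also have "(\<integral>\<^sup>+s. ?t s \<partial>lborel) = ennreal (1 / (\<beta> - 1))"
    using int_pos_tail[OF assms] .
  also have "(\<integral>\<^sup>+s. indicator {-1..1::real} s \<partial>lborel) = ennreal 2" by simp
  also have "ennreal 2 + ennreal (1 / (\<beta> - 1)) + ennreal (1 / (\<beta> - 1)) = ennreal (2 + 1 / (\<beta> - 1) + 1 / (\<beta> - 1))"
    using assms by (subst ennreal_plus, simp, simp, subst ennreal_plus, simp_all)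
  finally have "Cb \<beta> \<le> ennreal (2 + 1 / (\<beta> - 1) + 1 / (\<beta> - 1))" .
  then show ?thesis using le_less_trans by fastforce
qed


lemma jb_half_bound:
  assumes "\<bar>r\<bar> \<le> 2 * \<bar>s\<bar>" "\<beta> \<ge> 0"
  shows "jb s powr (-\<beta>) \<le> 2 powr \<beta> * jb r powr (-\<beta>)"
proof -
  have "\<bar>r\<bar>\<^sup>2 \<le> (2 * \<bar>s\<bar>)\<^sup>2" using assms(1) by (intro power_mono) auto
  then have "r\<^sup>2 \<le> (2 * \<bar>s\<bar>)\<^sup>2" by simp
  then have "1 + r\<^sup>2 \<le> (2 * jb s)\<^sup>2" unfolding jb_def by (simp add: power_mult_distrib)
  then have "jb r \<le> sqrt ((2 * jb s)\<^sup>2)" unfolding jb_def[of r] by (rule real_sqrt_le_mono)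
  also have "\<dots> = 2 * jb s" using jb_pos[of s] by (simp add: real_sqrt_mult)
  finally have "jb r \<le> 2 * jb s" .
  then have "jb s powr (-\<beta>) \<le> (jb r / 2) powr (-\<beta>)"
    using assms(2) jb_pos[of r] by (intro powr_mono2') auto
  also have "\<dots> = 2 powr \<beta> * jb r powr (-\<beta>)"
    using jb_pos[of r] by (simp add: powr_divide powr_minus divide_simps)
  finally show ?thesis .
qed

lemma jb_conv_pointwise:
  assumes "\<beta> \<ge> 0"
  shows "jb s powr (-\<beta>) * jb u powr (-\<beta>) \<le> 2 powr \<beta> * jb (s + u) powr (-\<beta>) * (jb s powr (-\<beta>) + jb u powr (-\<beta>))"
proof (cases "\<bar>s + u\<bar> \<le> 2 * \<bar>s\<bar>")
  case True
  have "jb s powr (-\<beta>) * jb u powr (-\<beta>) \<le> (2 powr \<beta> * jb (s+u) powr (-\<beta>)) * jb u powr (-\<beta>)"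
    by (intro mult_right_mono jb_half_bound True assms) auto
  also have "\<dots> \<le> 2 powr \<beta> * jb (s + u) powr (-\<beta>) * (jb s powr (-\<beta>) + jb u powr (-\<beta>))"
    by (intro mult_left_mono) auto
  finally show ?thesis .
next
  case False
  then have "\<bar>s + u\<bar> \<le> 2 * \<bar>u\<bar>" by linarith
  have "jb s powr (-\<beta>) * jb u powr (-\<beta>) \<le> jb s powr (-\<beta>) * (2 powr \<beta> * jb (s+u) powr (-\<beta>))"
    by (intro mult_left_mono jb_half_bound \<open>\<bar>s + u\<bar> \<le> 2 * \<bar>u\<bar>\<close> assms) auto
  also have "\<dots> \<le> 2 powr \<beta> * jb (s + u) powr (-\<beta>) * (jb s powr (-\<beta>) + jb u powr (-\<beta>))"
    by (simp add: algebra_simps)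
  finally show ?thesis .
qed

lemma jb_conv:
  assumes "\<beta> \<ge> 0"
  shows "(\<integral>\<^sup>+t. ennreal (jb (t - p) powr (-\<beta>) * jb (q - t) powr (-\<beta>)) \<partial>lborel)
     \<le> ennreal (2 * 2 powr \<beta>) * Cb \<beta> * ennreal (jb (q - p) powr (-\<beta>))"
proof -
  let ?K = "2 powr \<beta> * jb (q - p) powr (-\<beta>)"
  have "(\<integral>\<^sup>+t. ennreal (jb (t - p) powr (-\<beta>) * jb (q - t) powr (-\<beta>)) \<partial>lborel)
      \<le> (\<integral>\<^sup>+t. ennreal ?K * ennreal (jb (t - p) powr (-\<beta>)) + ennreal ?K * ennreal (jb (q - t) powr (-\<beta>)) \<partial>lborel)"
  proof (intro nn_integral_mono)
    fix t
    have "jb (t - p) powr (-\<beta>) * jb (q - t) powr (-\<beta>) \<le> ?K * (jb (t - p) powr (-\<beta>) + jb (q - t) powr (-\<beta>))"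
      using jb_conv_pointwise[OF assms, of "t - p" "q - t"] by simp
    then have "ennreal (jb (t - p) powr (-\<beta>) * jb (q - t) powr (-\<beta>)) \<le> ennreal (?K * jb (t - p) powr (-\<beta>) + ?K * jb (q - t) powr (-\<beta>))"
      by (intro ennreal_leI) (simp add: distrib_left)
    also have "\<dots> = ennreal ?K * ennreal (jb (t - p) powr (-\<beta>)) + ennreal ?K * ennreal (jb (q - t) powr (-\<beta>))"
      by (subst ennreal_plus) (auto simp: ennreal_mult)
    finally show "ennreal (jb (t - p) powr (-\<beta>) * jb (q - t) powr (-\<beta>)) \<le> ennreal ?K * ennreal (jb (t - p) powr (-\<beta>)) + ennreal ?K * ennreal (jb (q - t) powr (-\<beta>))" .
  qed
  also have "\<dots> = ennreal ?K * (\<integral>\<^sup>+t. ennreal (jb (t - p) powr (-\<beta>)) \<partial>lborel) + ennreal ?K * (\<integral>\<^sup>+t. ennreal (jb (q - t) powr (-\<beta>)) \<partial>lborel)"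
    by (subst nn_integral_add) (auto simp: nn_integral_cmult)
  also have "(\<integral>\<^sup>+t. ennreal (jb (t - p) powr (-\<beta>)) \<partial>lborel) = Cb \<beta>"
    unfolding Cb_def using nn_integral_shift[of "\<lambda>s. ennreal (jb s powr (-\<beta>))" "-p"] by simp
  also have "(\<integral>\<^sup>+t. ennreal (jb (q - t) powr (-\<beta>)) \<partial>lborel) = Cb \<beta>"
    unfolding Cb_def using nn_integral_reflect[of "\<lambda>s. ennreal (jb s powr (-\<beta>))" q] by simp
  also have "ennreal ?K * Cb \<beta> + ennreal ?K * Cb \<beta> = ennreal (2 * 2 powr \<beta>) * Cb \<beta> * ennreal (jb (q - p) powr (-\<beta>))"
  proof -
    have e1: "ennreal ?K = ennreal (2 powr \<beta>) * ennreal (jb (q - p) powr (-\<beta>))" by (simp add: ennreal_mult)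
    have e2: "ennreal (2 * 2 powr \<beta>) = 2 * ennreal (2 powr \<beta>)" by (simp add: ennreal_mult)
    show ?thesis unfolding e1 e2 by (simp add: mult_2 algebra_simps)
  qed
  finally show ?thesis .
qed


lemma nn_integral_halfline_le:
  fixes f :: "real \<Rightarrow> ennreal"
  assumes [measurable]: "f \<in> borel_measurable borel"
  assumes le: "\<And>n::nat. (\<integral>\<^sup>+x. f x * indicator {0..real n} x \<partial>lborel) \<le> C"
  shows "(\<integral>\<^sup>+x. f x * indicator {0..} x \<partial>lborel) \<le> C"
proof -
  have pw: "(SUP n. f x * indicator {0..real n} x) = f x * indicator {0..} x" for x
  proof (cases "x \<ge> 0")
    case True
    have "f x * indicator {0..} x \<le> (SUP n. f x * indicator {0..real n} x)"
    proof (rule SUP_upper2[of "nat \<lceil>x\<rceil>"])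
      show "f x * indicator {0..} x \<le> f x * indicator {0..real (nat \<lceil>x\<rceil>)} x"
        using True real_nat_ceiling_ge[of x] by (auto simp: indicator_def)
    qed simp
    moreover have "(SUP n. f x * indicator {0..real n} x) \<le> f x * indicator {0..} x"
      by (rule SUP_least) (auto simp: indicator_def)
    ultimately show ?thesis by (rule antisym[rotated])
  next
    case False
    then show ?thesis by (simp add: indicator_def)
  qed
  have "(\<integral>\<^sup>+x. f x * indicator {0..} x \<partial>lborel) = (\<integral>\<^sup>+x. (SUP n. f x * indicator {0..real n} x) \<partial>lborel)"
    by (simp add: pw)
  also have "\<dots> = (SUP n. \<integral>\<^sup>+x. f x * indicator {0..real n} x \<partial>lborel)"
  proof (rule nn_integral_monotone_convergence_SUP)
    show "incseq (\<lambda>n x. f x * indicator {0..real n} x)"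
      by (auto simp: incseq_def le_fun_def indicator_def intro!: mult_left_mono)
  qed measurable
  also have "\<dots> \<le> C" by (rule SUP_least) (rule le)
  finally show ?thesis .
qed


lemma H_int:
  assumes "\<sigma> = 1 \<or> \<sigma> = -1"
  shows "(\<integral>\<^sup>+\<mu>. ennreal (jb (T - \<sigma> * \<mu>) powr (-\<beta>)) \<partial>lborel) = Cb \<beta>"
proof -
  have "Cb \<beta> = ennreal \<bar>- \<sigma>\<bar> * (\<integral>\<^sup>+x. ennreal (jb (T + (- \<sigma>) * x) powr (-\<beta>)) \<partial>lborel)"
    unfolding Cb_def using assms
    by (intro nn_integral_real_affine[of "\<lambda>s. ennreal (jb s powr (-\<beta>))"]) (auto, measurable)
  then show ?thesis using assms by auto
qed

lemma sub_piece:
  assumes a: "a > 0" and s: "\<sigma> = 1 \<or> \<sigma> = -1"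
  shows "(\<integral>\<^sup>+v. ennreal (jb (T - \<sigma> * (3 * a * v\<^sup>2)) powr (-\<beta>) * (6 * a * v) * indicator {0..real n} v) \<partial>lborel) \<le> Cb \<beta>"
proof -
  let ?f = "\<lambda>\<mu>. jb (T - \<sigma> * \<mu>) powr (-\<beta>)"
  let ?g = "\<lambda>v::real. 3 * a * v\<^sup>2"
  have sub: "(\<integral>\<^sup>+x. ennreal (?f x * indicator {?g 0..?g (real n)} x) \<partial>lborel) =
        (\<integral>\<^sup>+x. ennreal (?f (?g x) * (6 * a * x) * indicator {0..real n} x) \<partial>lborel)"
  proof (rule nn_integral_substitution)
    show "set_borel_measurable borel {?g 0..?g (real n)} ?f"
      unfolding set_borel_measurable_def by measurable
    fix x :: real
    show "(?g has_real_derivative 6 * a * x) (at x)"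
      by (auto intro!: derivative_eq_intros)
    assume "x \<in> {0..real n}"
    then show "0 \<le> 6 * a * x" using a by auto
  next
    show "continuous_on {0..real n} (\<lambda>x. 6 * a * x)" by (intro continuous_intros)
  qed simp
  have "(\<integral>\<^sup>+x. ennreal (?f x * indicator {?g 0..?g (real n)} x) \<partial>lborel) \<le> (\<integral>\<^sup>+x. ennreal (?f x) \<partial>lborel)"
    by (intro nn_integral_mono ennreal_leI) (auto simp: indicator_def)
  also have "\<dots> = Cb \<beta>" using H_int[OF s] .
  finally show ?thesis unfolding sub .
qed

lemma cube_identity:
  "(v + \<xi>/2)^3 + (\<xi> - (v + \<xi>/2))^3 = (\<xi>::real)^3/4 + 3 * \<xi> * v\<^sup>2"
  by (simp add: power3_eq_cube power2_eq_square field_simps)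

lemma subst_core:
  "(\<integral>\<^sup>+x. ennreal (\<bar>\<xi>\<bar> * \<bar>x - (\<xi> - x)\<bar> * jb (T - x^3 - (\<xi> - x)^3) powr (-\<beta>)) \<partial>lborel) \<le> 2 * Cb \<beta>"
proof (cases "\<xi> = 0")
  case True
  then show ?thesis by (simp only: True abs_zero mult_zero_left ennreal_0 nn_integral_const mult_zero_left zero_le)
next
  case False
  define a where "a = \<bar>\<xi>\<bar>"
  define \<sigma> where "\<sigma> = sgn \<xi>"
  define T' where "T' = T - \<xi>^3/4"
  have a: "a > 0" using False by (simp add: a_def)
  have s: "\<sigma> = 1 \<or> \<sigma> = -1" using False by (auto simp: \<sigma>_def sgn_if)
  have xi: "\<xi> = \<sigma> * a" by (simp add: a_def \<sigma>_def sgn_mult_abs)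
  let ?h = "\<lambda>x. ennreal (\<bar>\<xi>\<bar> * \<bar>x - (\<xi> - x)\<bar> * jb (T - x^3 - (\<xi> - x)^3) powr (-\<beta>))"
  let ?H = "\<lambda>v. jb (T' - \<sigma> * (3 * a * v\<^sup>2)) powr (-\<beta>)"
  let ?\<psi> = "\<lambda>v. ennreal (?H v * (6 * a * v) * indicator {0..} v)"
  have psi_le: "(\<integral>\<^sup>+v. ?\<psi> v \<partial>lborel) \<le> Cb \<beta>"
  proof -
    have "(\<integral>\<^sup>+v. ?\<psi> v \<partial>lborel) = (\<integral>\<^sup>+v. ennreal (?H v * (6 * a * v)) * indicator {0..} v \<partial>lborel)"
      by (intro nn_integral_cong) (auto simp: indicator_def)
    also have "\<dots> \<le> Cb \<beta>"
    proof (rule nn_integral_halfline_le)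
      fix n :: nat
      have "(\<integral>\<^sup>+v. ennreal (?H v * (6 * a * v)) * indicator {0..real n} v \<partial>lborel)
           = (\<integral>\<^sup>+v. ennreal (?H v * (6 * a * v) * indicator {0..real n} v) \<partial>lborel)"
        by (intro nn_integral_cong) (auto simp: indicator_def)
      also have "\<dots> \<le> Cb \<beta>" by (rule sub_piece[OF a s])
      finally show "(\<integral>\<^sup>+v. ennreal (?H v * (6 * a * v)) * indicator {0..real n} v \<partial>lborel) \<le> Cb \<beta>" .
    qed measurable
    finally show ?thesis .
  qed
  have "(\<integral>\<^sup>+x. ?h x \<partial>lborel) = (\<integral>\<^sup>+v. ?h (v + \<xi>/2) \<partial>lborel)"
    by (rule nn_integral_shift[symmetric]) measurable
  also have "\<dots> \<le> (\<integral>\<^sup>+v. ?\<psi> v + ?\<psi> (0 - v) \<partial>lborel)"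
  proof (intro nn_integral_mono)
    fix v :: real
    have eq: "?h (v + \<xi>/2) = ennreal (a * (2 * \<bar>v\<bar>) * ?H v)"
    proof -
      have "T - (v + \<xi>/2)^3 - (\<xi> - (v + \<xi>/2))^3 = T' - \<sigma> * (3 * a * v\<^sup>2)"
        unfolding T'_def by (subst diff_diff_eq, subst cube_identity) (simp add: xi algebra_simps)
      moreover have "\<bar>(v + \<xi>/2) - (\<xi> - (v + \<xi>/2))\<bar> = 2 * \<bar>v\<bar>" by simp
      ultimately show ?thesis by (simp add: a_def)
    qed
    show "?h (v + \<xi>/2) \<le> ?\<psi> v + ?\<psi> (0 - v)"
    proof (cases "v \<ge> 0")
      case True
      have "ennreal (a * (2 * \<bar>v\<bar>) * ?H v) \<le> ?\<psi> v"
        using True a by (intro ennreal_leI) (auto simp: indicator_def mult_ac intro!: mult_right_mono)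
      then show ?thesis unfolding eq by (simp add: add_increasing2)
    next
      case False
      have "ennreal (a * (2 * \<bar>v\<bar>) * ?H v) \<le> ?\<psi> (0 - v)"
        using False a by (intro ennreal_leI) (auto simp: indicator_def mult_ac intro!: mult_right_mono)
      then show ?thesis unfolding eq by (simp add: add_increasing)
    qed
  qed
  also have "\<dots> = (\<integral>\<^sup>+v. ?\<psi> v \<partial>lborel) + (\<integral>\<^sup>+v. ?\<psi> (0 - v) \<partial>lborel)"
    by (rule nn_integral_add) measurable
  also have "(\<integral>\<^sup>+v. ?\<psi> (0 - v) \<partial>lborel) = (\<integral>\<^sup>+v. ?\<psi> v \<partial>lborel)"
    by (rule nn_integral_reflect) measurable
  also have "(\<integral>\<^sup>+v. ?\<psi> v \<partial>lborel) + (\<integral>\<^sup>+v. ?\<psi> v \<partial>lborel) \<le> Cb \<beta> + Cb \<beta>"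
    by (intro add_mono psi_le)
  finally show ?thesis unfolding mult_2 .
qed


abbreviation "L2 \<equiv> (lborel::real measure) \<Otimes>\<^sub>M (lborel::real measure)"
abbreviation "L3 \<equiv> (lborel::real measure) \<Otimes>\<^sub>M L2"

lemma L2_iter_snd:
  assumes "f \<in> borel_measurable L2"
  shows "(\<integral>\<^sup>+p. f p \<partial>L2) = (\<integral>\<^sup>+y. \<integral>\<^sup>+x. f (x, y) \<partial>lborel \<partial>lborel)"
  using lborel_pair.nn_integral_snd[OF assms] by simp

lemma L2_iter_fst:
  assumes "f \<in> borel_measurable L2"
  shows "(\<integral>\<^sup>+p. f p \<partial>L2) = (\<integral>\<^sup>+x. \<integral>\<^sup>+y. f (x, y) \<partial>lborel \<partial>lborel)"
  using lborel.nn_integral_fst[OF assms] by simp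

definition C0 :: "real \<Rightarrow> ennreal" where
  "C0 \<beta> = ennreal (2 * 2 powr \<beta>) * Cb \<beta> * (2 * Cb \<beta>)"

lemma core2D:
  assumes "\<beta> \<ge> 0"
  shows "(\<integral>\<^sup>+p. ennreal (\<bar>\<xi>\<bar> * \<bar>snd p - (\<xi> - snd p)\<bar> *
            (jb (fst p - snd p ^ 3 - c1) powr (-\<beta>) * jb (\<tau> - fst p - (\<xi> - snd p) ^ 3 - c2) powr (-\<beta>))) \<partial>L2)
         \<le> C0 \<beta>"
proof -
  let ?K = "ennreal (2 * 2 powr \<beta>) * Cb \<beta>"
  let ?A = "\<lambda>x. \<bar>\<xi>\<bar> * \<bar>x - (\<xi> - x)\<bar>"
  have "(\<integral>\<^sup>+p. ennreal (?A (snd p) *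
            (jb (fst p - snd p ^ 3 - c1) powr (-\<beta>) * jb (\<tau> - fst p - (\<xi> - snd p) ^ 3 - c2) powr (-\<beta>))) \<partial>L2)
      = (\<integral>\<^sup>+x. \<integral>\<^sup>+t. ennreal (?A x *
            (jb (t - x ^ 3 - c1) powr (-\<beta>) * jb (\<tau> - t - (\<xi> - x) ^ 3 - c2) powr (-\<beta>))) \<partial>lborel \<partial>lborel)"
    by (subst L2_iter_snd) (simp, measurable)
  also have "\<dots> \<le> (\<integral>\<^sup>+x. ?K * ennreal (?A x * jb ((\<tau> - c1 - c2) - x ^ 3 - (\<xi> - x) ^ 3) powr (-\<beta>)) \<partial>lborel)"
  proof (intro nn_integral_mono)
    fix x
    have "(\<integral>\<^sup>+t. ennreal (?A x * (jb (t - x ^ 3 - c1) powr (-\<beta>) * jb (\<tau> - t - (\<xi> - x) ^ 3 - c2) powr (-\<beta>))) \<partial>lborel)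
       = ennreal (?A x) * (\<integral>\<^sup>+t. ennreal (jb (t - (x ^ 3 + c1)) powr (-\<beta>) * jb ((\<tau> - (\<xi> - x) ^ 3 - c2) - t) powr (-\<beta>)) \<partial>lborel)"
      by (subst nn_integral_cmult[symmetric]) (auto simp: ennreal_mult[symmetric] algebra_simps)
    also have "\<dots> \<le> ennreal (?A x) * (?K * ennreal (jb ((\<tau> - (\<xi> - x) ^ 3 - c2) - (x ^ 3 + c1)) powr (-\<beta>)))"
      by (intro mult_left_mono jb_conv assms) auto
    also have "\<dots> = ?K * ennreal (?A x * jb ((\<tau> - c1 - c2) - x ^ 3 - (\<xi> - x) ^ 3) powr (-\<beta>))"
      by (simp add: ennreal_mult algebra_simps)
    finally show "(\<integral>\<^sup>+t. ennreal (?A x * (jb (t - x ^ 3 - c1) powr (-\<beta>) * jb (\<tau> - t - (\<xi> - x) ^ 3 - c2) powr (-\<beta>))) \<partial>lborel)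
       \<le> ?K * ennreal (?A x * jb ((\<tau> - c1 - c2) - x ^ 3 - (\<xi> - x) ^ 3) powr (-\<beta>))" .
  qed
  also have "\<dots> = ?K * (\<integral>\<^sup>+x. ennreal (?A x * jb ((\<tau> - c1 - c2) - x ^ 3 - (\<xi> - x) ^ 3) powr (-\<beta>)) \<partial>lborel)"
    by (rule nn_integral_cmult) measurable
  also have "\<dots> \<le> ?K * (2 * Cb \<beta>)"
    by (intro mult_left_mono subst_core[of \<xi> "\<tau> - c1 - c2" \<beta>]) simp
  finally show ?thesis unfolding C0_def .
qed


definition W :: "real \<Rightarrow> real \<times> real \<times> real \<Rightarrow> ennreal" where
  "W b \<zeta> = ennreal (jb (fst \<zeta> - fst (snd \<zeta>) ^ 3 - snd (snd \<zeta>) ^ 3) powr b)"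

lemma W_meas[measurable]: "W b \<in> borel_measurable L3"
  unfolding W_def by measurable

definition kk :: "(real \<times> real \<times> real \<Rightarrow> ennreal) \<Rightarrow> (real \<times> real \<times> real \<Rightarrow> ennreal) \<Rightarrow> real \<Rightarrow> real \<Rightarrow> real \<Rightarrow> real \<Rightarrow> ennreal" where
  "kk F G \<tau> \<xi> \<eta>1 \<eta>2 = (\<integral>\<^sup>+p. ennreal (\<bar>snd p - (\<xi> - snd p)\<bar> powr (1/2)) * F (fst p, snd p, \<eta>1) * G (\<tau> - fst p, \<xi> - snd p, \<eta>2) \<partial>L2)"

definition AA :: "real \<Rightarrow> (real \<times> real \<times> real \<Rightarrow> ennreal) \<Rightarrow> (real \<times> real \<times> real \<Rightarrow> ennreal) \<Rightarrow> real \<Rightarrow> real \<Rightarrow> real \<Rightarrow> real \<Rightarrow> ennreal" where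
  "AA b F G \<tau> \<xi> \<eta>1 \<eta>2 = (\<integral>\<^sup>+p. (W b (fst p, snd p, \<eta>1) * F (fst p, snd p, \<eta>1))\<^sup>2 * (W b (\<tau> - fst p, \<xi> - snd p, \<eta>2) * G (\<tau> - fst p, \<xi> - snd p, \<eta>2))\<^sup>2 \<partial>L2)"

lemma ennreal_sq_mult:
  assumes "0 \<le> c" "0 \<le> X"
  shows "ennreal c * (ennreal X)\<^sup>2 = ennreal (c * X\<^sup>2)"
  using assms by (simp add: ennreal_mult ennreal_power)

lemma ennreal_cancel4:
  fixes a a' c c' x :: ennreal
  assumes "a * a' = 1" "c * c' = 1"
  shows "x = a * (c * (a' * (c' * x)))"
proof -
  have "a * (c * (a' * (c' * x))) = (a * a') * ((c * c') * x)" by (simp add: ac_simps)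
  then show ?thesis using assms by simp
qed

lemma key_CS:
  fixes F G :: "real \<times> real \<times> real \<Rightarrow> ennreal"
  assumes [measurable]: "F \<in> borel_measurable L3" "G \<in> borel_measurable L3" and b: "b \<ge> 0"
  shows "ennreal \<bar>\<xi>\<bar> * (kk F G \<tau> \<xi> \<eta>1 \<eta>2)\<^sup>2 \<le> C0 (2 * b) * AA b F G \<tau> \<xi> \<eta>1 \<eta>2"
proof -
  define j1 where "j1 = (\<lambda>p::real\<times>real. jb (fst p - snd p ^ 3 - \<eta>1 ^ 3))"
  define j2 where "j2 = (\<lambda>p::real\<times>real. jb (\<tau> - fst p - (\<xi> - snd p) ^ 3 - \<eta>2 ^ 3))"
  have [measurable]: "j1 \<in> borel_measurable L2" "j2 \<in> borel_measurable L2"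
    unfolding j1_def j2_def by measurable
  have j1p: "j1 p > 0" and j2p: "j2 p > 0" for p unfolding j1_def j2_def by (auto intro: jb_pos)
  define u where "u = (\<lambda>p::real\<times>real. ennreal (\<bar>snd p - (\<xi> - snd p)\<bar> powr (1/2) * (j1 p powr (-b) * j2 p powr (-b))))"
  define v where "v = (\<lambda>p::real\<times>real. W b (fst p, snd p, \<eta>1) * F (fst p, snd p, \<eta>1) * (W b (\<tau> - fst p, \<xi> - snd p, \<eta>2) * G (\<tau> - fst p, \<xi> - snd p, \<eta>2)))"
  have [measurable]: "u \<in> borel_measurable L2" "v \<in> borel_measurable L2"
    unfolding u_def v_def by measurable
  have W1: "W b (fst p, snd p, \<eta>1) = ennreal (j1 p powr b)" for p
    unfolding W_def j1_def by simp
  have W2: "W b (\<tau> - fst p, \<xi> - snd p, \<eta>2) = ennreal (j2 p powr b)" for p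
    unfolding W_def j2_def by simp
  have uv: "ennreal (\<bar>snd p - (\<xi> - snd p)\<bar> powr (1/2)) * F (fst p, snd p, \<eta>1) * G (\<tau> - fst p, \<xi> - snd p, \<eta>2) = u p * v p" for p
  proof -
    have "j1 p powr (-b) * j1 p powr b = 1" using j1p[of p] by (simp add: powr_minus field_simps)
    moreover have "j2 p powr (-b) * j2 p powr b = 1" using j2p[of p] by (simp add: powr_minus field_simps)
    ultimately have "ennreal (j1 p powr (-b)) * ennreal (j1 p powr b) = 1" "ennreal (j2 p powr (-b)) * ennreal (j2 p powr b) = 1"
      by (simp_all add: ennreal_mult[symmetric])
    then show ?thesis
      unfolding u_def v_def W1 W2
      by (simp add: ennreal_mult mult_ac ennreal_cancel4[symmetric])
  qed
  have "(kk F G \<tau> \<xi> \<eta>1 \<eta>2)\<^sup>2 = (\<integral>\<^sup>+p. u p * v p \<partial>L2)\<^sup>2"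
    unfolding kk_def uv ..
  also have "\<dots> \<le> (\<integral>\<^sup>+p. u p ^ 2 \<partial>L2) * (\<integral>\<^sup>+p. v p ^ 2 \<partial>L2)"
    by (rule Cauchy_Schwarz_nn_integral) measurable
  finally have cs: "(kk F G \<tau> \<xi> \<eta>1 \<eta>2)\<^sup>2 \<le> (\<integral>\<^sup>+p. u p ^ 2 \<partial>L2) * (\<integral>\<^sup>+p. v p ^ 2 \<partial>L2)" .
  have v2: "(\<integral>\<^sup>+p. v p ^ 2 \<partial>L2) = AA b F G \<tau> \<xi> \<eta>1 \<eta>2"
    unfolding AA_def v_def by (simp add: power_mult_distrib)
  have u2: "ennreal \<bar>\<xi>\<bar> * (\<integral>\<^sup>+p. u p ^ 2 \<partial>L2) \<le> C0 (2 * b)"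
  proof -
    have "ennreal \<bar>\<xi>\<bar> * (\<integral>\<^sup>+p. u p ^ 2 \<partial>L2) = (\<integral>\<^sup>+p. ennreal \<bar>\<xi>\<bar> * u p ^ 2 \<partial>L2)"
      by (rule nn_integral_cmult[symmetric]) measurable
    also have "\<dots> = (\<integral>\<^sup>+p. ennreal (\<bar>\<xi>\<bar> * \<bar>snd p - (\<xi> - snd p)\<bar> *
            (jb (fst p - snd p ^ 3 - \<eta>1 ^ 3) powr (-(2 * b)) * jb (\<tau> - fst p - (\<xi> - snd p) ^ 3 - \<eta>2 ^ 3) powr (-(2 * b)))) \<partial>L2)"
    proof (intro nn_integral_cong)
      fix p :: "real \<times> real"
      have "(\<bar>snd p - (\<xi> - snd p)\<bar> powr (1/2) * (j1 p powr (-b) * j2 p powr (-b)))\<^sup>2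
          = \<bar>snd p - (\<xi> - snd p)\<bar> * (j1 p powr (-(2*b)) * j2 p powr (-(2*b)))"
        using j1p[of p] j2p[of p]
        by (simp add: power_mult_distrib powr_powr[symmetric] powr_realpow[symmetric] powr_powr mult_ac powr_half_sqrt)
      then show "ennreal \<bar>\<xi>\<bar> * u p ^ 2 = ennreal (\<bar>\<xi>\<bar> * \<bar>snd p - (\<xi> - snd p)\<bar> *
            (jb (fst p - snd p ^ 3 - \<eta>1 ^ 3) powr (-(2 * b)) * jb (\<tau> - fst p - (\<xi> - snd p) ^ 3 - \<eta>2 ^ 3) powr (-(2 * b))))"
        unfolding u_def j1_def j2_def by (subst ennreal_sq_mult) (auto simp: mult.assoc)
    qed
    also have "\<dots> \<le> C0 (2 * b)"
      by (rule core2D) (use b in simp)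
    finally show ?thesis .
  qed
  have "ennreal \<bar>\<xi>\<bar> * (kk F G \<tau> \<xi> \<eta>1 \<eta>2)\<^sup>2 \<le> ennreal \<bar>\<xi>\<bar> * ((\<integral>\<^sup>+p. u p ^ 2 \<partial>L2) * (\<integral>\<^sup>+p. v p ^ 2 \<partial>L2))"
    by (intro mult_left_mono cs) simp
  also have "\<dots> = (ennreal \<bar>\<xi>\<bar> * (\<integral>\<^sup>+p. u p ^ 2 \<partial>L2)) * AA b F G \<tau> \<xi> \<eta>1 \<eta>2"
    by (simp add: v2 mult.assoc)
  also have "\<dots> \<le> C0 (2 * b) * AA b F G \<tau> \<xi> \<eta>1 \<eta>2"
    by (intro mult_right_mono u2) simp
  finally show ?thesis .
qed


definition esq :: "ennreal \<Rightarrow> ennreal" where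
  "esq x = (if x = top then top else ennreal (sqrt (enn2real x)))"

lemma esq_meas[measurable]: "esq \<in> borel_measurable borel"
  unfolding esq_def by measurable

lemma esq_sq[simp]: "(esq x)\<^sup>2 = x"
proof (cases x)
  case (real r)
  then have "(ennreal (sqrt r))\<^sup>2 = ennreal ((sqrt r)\<^sup>2)" by (simp add: ennreal_power)
  also have "\<dots> = ennreal r" using real by simp
  finally show ?thesis using real by (simp add: esq_def)
qed (simp add: esq_def)

lemma esq_0[simp]: "esq 0 = 0"
  by (simp add: esq_def)

lemma sq_le_imp_le_ennreal:
  fixes x y :: ennreal
  assumes "x\<^sup>2 \<le> y\<^sup>2" shows "x \<le> y"
proof (rule ccontr)
  assume "\<not> x \<le> y"
  then have "y < x" by simp
  then have "y\<^sup>2 < x\<^sup>2"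
  proof (cases x rule: ennreal_cases)
    case (real s)
    obtain r where r: "y = ennreal r" "0 \<le> r"
      using \<open>y < x\<close> real by (cases y rule: ennreal_cases) auto
    have "r < s" using \<open>y < x\<close> real r by (simp add: ennreal_less_iff)
    then have "r\<^sup>2 < s\<^sup>2" using r by (intro power_strict_mono) auto
    then show ?thesis using r real by (simp add: ennreal_power ennreal_less_iff)
  next
    case top
    then show ?thesis using \<open>y < x\<close> by (simp add: power_less_top_ennreal)
  qed
  with assms show False by simp
qed

lemma le_esq: "(x::ennreal)\<^sup>2 \<le> y \<Longrightarrow> x \<le> esq y"
  by (rule sq_le_imp_le_ennreal) simp

lemma esq_mult: "esq (x * y) = esq x * esq y"
  by (rule antisym; rule sq_le_imp_le_ennreal) (simp_all add: power_mult_distrib)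

lemma esq_mono: "x \<le> y \<Longrightarrow> esq x \<le> esq y"
  by (rule sq_le_imp_le_ennreal) simp

lemma sf_L2: "sigma_finite_measure L2"
  by (simp add: lborel_prod lborel.sigma_finite_measure_axioms)

interpretation L2L2: pair_sigma_finite L2 L2
  by (intro pair_sigma_finite.intro sf_L2)
interpretation L2R: pair_sigma_finite L2 lborel
  by (intro pair_sigma_finite.intro sf_L2 lborel.sigma_finite_measure_axioms)
interpretation RL2: pair_sigma_finite lborel L2
  by (intro pair_sigma_finite.intro sf_L2 lborel.sigma_finite_measure_axioms)

lemma kk_meas[measurable (raw)]:
  assumes "F \<in> borel_measurable L3" "G \<in> borel_measurable L3"
    "f \<in> borel_measurable M" "g \<in> borel_measurable M" "h \<in> borel_measurable M" "k \<in> borel_measurable M"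
  shows "(\<lambda>x. kk F G (f x) (g x) (h x) (k x)) \<in> borel_measurable M"
  using assms unfolding kk_def by measurable

lemma AA_meas[measurable (raw)]:
  assumes "F \<in> borel_measurable L3" "G \<in> borel_measurable L3"
    "f \<in> borel_measurable M" "g \<in> borel_measurable M" "h \<in> borel_measurable M" "k \<in> borel_measurable M"
  shows "(\<lambda>x. AA b F G (f x) (g x) (h x) (k x)) \<in> borel_measurable M"
  using assms unfolding AA_def by measurable

lemma L2_shift:
  fixes Y :: "real \<times> real \<Rightarrow> ennreal"
  assumes [measurable]: "Y \<in> borel_measurable L2"
  shows "(\<integral>\<^sup>+p. Y (fst p - a, snd p - c) \<partial>L2) = (\<integral>\<^sup>+p. Y p \<partial>L2)"
proof -
  have "(\<integral>\<^sup>+p. Y (fst p - a, snd p - c) \<partial>L2) = (\<integral>\<^sup>+x. \<integral>\<^sup>+y. Y (x - a, y - c) \<partial>lborel \<partial>lborel)"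
    by (subst L2_iter_fst) (simp, measurable)
  also have "\<dots> = (\<integral>\<^sup>+x. \<integral>\<^sup>+y. Y (x - a, y) \<partial>lborel \<partial>lborel)"
  proof (rule nn_integral_cong)
    fix x :: real assume "x \<in> space lborel"
    have m: "(\<lambda>y. Y (x - a, y)) \<in> borel_measurable borel" by measurable
    show "(\<integral>\<^sup>+y. Y (x - a, y - c) \<partial>lborel) = (\<integral>\<^sup>+y. Y (x - a, y) \<partial>lborel)"
      using nn_integral_shift[OF m, of "-c"] by simp
  qed
  also have "\<dots> = (\<integral>\<^sup>+x. \<integral>\<^sup>+y. Y (x, y) \<partial>lborel \<partial>lborel)"
  proof -
    have m: "(\<lambda>x. \<integral>\<^sup>+y. Y (x, y) \<partial>lborel) \<in> borel_measurable borel" by measurable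
    show ?thesis using nn_integral_shift[OF m, of "-a"] by simp
  qed
  also have "\<dots> = (\<integral>\<^sup>+p. Y p \<partial>L2)"
    by (subst L2_iter_fst) (simp, measurable)
  finally show ?thesis .
qed

definition sl :: "real \<Rightarrow> (real \<times> real \<times> real \<Rightarrow> ennreal) \<Rightarrow> real \<Rightarrow> ennreal" where
  "sl b F e = (\<integral>\<^sup>+p. (W b (fst p, snd p, e) * F (fst p, snd p, e))\<^sup>2 \<partial>L2)"

lemma sl_meas[measurable (raw)]:
  assumes "F \<in> borel_measurable L3" "h \<in> borel_measurable M"
  shows "(\<lambda>x. sl b F (h x)) \<in> borel_measurable M"
  using assms unfolding sl_def by measurable

lemma AA_int:
  assumes [measurable]: "F \<in> borel_measurable L3" "G \<in> borel_measurable L3"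
  shows "(\<integral>\<^sup>+p. AA b F G (fst p) (snd p) e1 e2 \<partial>L2) = sl b F e1 * sl b G e2"
proof -
  let ?X = "\<lambda>q::real\<times>real. (W b (fst q, snd q, e1) * F (fst q, snd q, e1))\<^sup>2"
  let ?Y = "\<lambda>q::real\<times>real. (W b (fst q, snd q, e2) * G (fst q, snd q, e2))\<^sup>2"
  have "(\<integral>\<^sup>+p. AA b F G (fst p) (snd p) e1 e2 \<partial>L2) = (\<integral>\<^sup>+p. \<integral>\<^sup>+q. ?X q * ?Y (fst p - fst q, snd p - snd q) \<partial>L2 \<partial>L2)"
    unfolding AA_def by simp
  also have "\<dots> = (\<integral>\<^sup>+q. \<integral>\<^sup>+p. ?X q * ?Y (fst p - fst q, snd p - snd q) \<partial>L2 \<partial>L2)"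
    by (rule L2L2.Fubini'[symmetric]) measurable
  also have "\<dots> = (\<integral>\<^sup>+q. ?X q * (\<integral>\<^sup>+p. ?Y (fst p - fst q, snd p - snd q) \<partial>L2) \<partial>L2)"
    by (intro nn_integral_cong nn_integral_cmult) measurable
  also have "\<dots> = (\<integral>\<^sup>+q. ?X q * (\<integral>\<^sup>+p. ?Y p \<partial>L2) \<partial>L2)"
    by (intro nn_integral_cong arg_cong2[where f="(*)"] refl L2_shift) measurable
  also have "\<dots> = (\<integral>\<^sup>+q. ?X q \<partial>L2) * (\<integral>\<^sup>+p. ?Y p \<partial>L2)"
    by (rule nn_integral_multc) measurable
  finally show ?thesis unfolding sl_def .
qed


lemma sq_integral:
  fixes f :: "'a \<Rightarrow> ennreal"
  assumes [measurable]: "f \<in> borel_measurable M"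
  shows "(\<integral>\<^sup>+x. f x \<partial>M)\<^sup>2 = (\<integral>\<^sup>+x. \<integral>\<^sup>+y. f x * f y \<partial>M \<partial>M)"
proof -
  have "(\<integral>\<^sup>+x. f x \<partial>M)\<^sup>2 = (\<integral>\<^sup>+x. f x * (\<integral>\<^sup>+y. f y \<partial>M) \<partial>M)"
    by (simp add: power2_eq_square nn_integral_multc)
  also have "\<dots> = (\<integral>\<^sup>+x. \<integral>\<^sup>+y. f x * f y \<partial>M \<partial>M)"
    by (simp add: nn_integral_cmult)
  finally show ?thesis .
qed

lemma esq_sq2[simp]: "esq (x\<^sup>2) = x"
  by (rule antisym; rule sq_le_imp_le_ennreal) simp_all

lemma CS_esq:
  fixes u v :: "'a \<Rightarrow> ennreal"
  assumes [measurable]: "u \<in> borel_measurable M" "v \<in> borel_measurable M"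
  shows "(\<integral>\<^sup>+x. u x * v x \<partial>M) \<le> esq (\<integral>\<^sup>+x. (u x)\<^sup>2 \<partial>M) * esq (\<integral>\<^sup>+x. (v x)\<^sup>2 \<partial>M)"
  unfolding esq_mult[symmetric] by (rule le_esq, rule Cauchy_Schwarz_nn_integral) measurable

lemma minkowski_bound:
  fixes F G :: "real \<times> real \<times> real \<Rightarrow> ennreal"
  assumes [measurable]: "F \<in> borel_measurable L3" "G \<in> borel_measurable L3" "ch \<in> borel_measurable borel"
    and b: "b \<ge> 0"
  shows "(\<integral>\<^sup>+p. ennreal \<bar>snd p\<bar> * (\<integral>\<^sup>+e. ch e * kk F G (fst p) (snd p) e (\<eta> - e) \<partial>lborel)\<^sup>2 \<partial>L2)
        \<le> C0 (2 * b) * (\<integral>\<^sup>+e. ch e * (esq (sl b F e) * esq (sl b G (\<eta> - e))) \<partial>lborel)\<^sup>2"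
proof -
  define Q where "Q e p = esq (ennreal \<bar>snd p\<bar>) * (ch e * kk F G (fst p) (snd p) e (\<eta> - e))" for e p
  define R where "R e = ch e * (esq (sl b F e) * esq (sl b G (\<eta> - e)))" for e
  have [measurable]: "(\<lambda>(e, p). Q e p) \<in> borel_measurable (lborel \<Otimes>\<^sub>M L2)"
    unfolding Q_def by measurable
  have Qm1: "(\<lambda>e. Q e p) \<in> borel_measurable lborel" for p
    unfolding Q_def by measurable
  have Qm2: "(\<lambda>p. Q e p) \<in> borel_measurable L2" for e
    unfolding Q_def by measurable
  have [measurable]: "R \<in> borel_measurable borel"
    unfolding R_def by measurable
  have step1: "ennreal \<bar>snd p\<bar> * (\<integral>\<^sup>+e. ch e * kk F G (fst p) (snd p) e (\<eta> - e) \<partial>lborel)\<^sup>2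
      = (\<integral>\<^sup>+e. \<integral>\<^sup>+e'. Q e p * Q e' p \<partial>lborel \<partial>lborel)" for p
  proof -
    have "ennreal \<bar>snd p\<bar> * (\<integral>\<^sup>+e. ch e * kk F G (fst p) (snd p) e (\<eta> - e) \<partial>lborel)\<^sup>2
       = (esq (ennreal \<bar>snd p\<bar>) * (\<integral>\<^sup>+e. ch e * kk F G (fst p) (snd p) e (\<eta> - e) \<partial>lborel))\<^sup>2"
      by (simp add: power_mult_distrib)
    also have "esq (ennreal \<bar>snd p\<bar>) * (\<integral>\<^sup>+e. ch e * kk F G (fst p) (snd p) e (\<eta> - e) \<partial>lborel) = (\<integral>\<^sup>+e. Q e p \<partial>lborel)"
      unfolding Q_def by (rule nn_integral_cmult[symmetric]) measurable
    also have "(\<integral>\<^sup>+e. Q e p \<partial>lborel)\<^sup>2 = (\<integral>\<^sup>+e. \<integral>\<^sup>+e'. Q e p * Q e' p \<partial>lborel \<partial>lborel)"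
      by (rule sq_integral) (rule Qm1)
    finally show ?thesis .
  qed
  have "(\<integral>\<^sup>+p. ennreal \<bar>snd p\<bar> * (\<integral>\<^sup>+e. ch e * kk F G (fst p) (snd p) e (\<eta> - e) \<partial>lborel)\<^sup>2 \<partial>L2)
      = (\<integral>\<^sup>+p. \<integral>\<^sup>+e. \<integral>\<^sup>+e'. Q e p * Q e' p \<partial>lborel \<partial>lborel \<partial>L2)"
    by (simp add: step1)
  also have "\<dots> = (\<integral>\<^sup>+e. \<integral>\<^sup>+p. \<integral>\<^sup>+e'. Q e p * Q e' p \<partial>lborel \<partial>L2 \<partial>lborel)"
    by (rule L2R.Fubini'[symmetric]) (unfold Q_def, measurable)
  also have "\<dots> = (\<integral>\<^sup>+e. \<integral>\<^sup>+e'. \<integral>\<^sup>+p. Q e p * Q e' p \<partial>L2 \<partial>lborel \<partial>lborel)"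
    by (intro nn_integral_cong L2R.Fubini'[symmetric]) (unfold Q_def, measurable)
  also have "\<dots> \<le> (\<integral>\<^sup>+e. \<integral>\<^sup>+e'. (esq (C0 (2 * b)) * R e) * (esq (C0 (2 * b)) * R e') \<partial>lborel \<partial>lborel)"
  proof (intro nn_integral_mono)
    fix e e' :: real
    have bound: "esq (\<integral>\<^sup>+p. (Q e p)\<^sup>2 \<partial>L2) \<le> esq (C0 (2 * b)) * R e" for e
    proof -
      have "(\<integral>\<^sup>+p. (Q e p)\<^sup>2 \<partial>L2) = (\<integral>\<^sup>+p. (ch e)\<^sup>2 * (ennreal \<bar>snd p\<bar> * (kk F G (fst p) (snd p) e (\<eta> - e))\<^sup>2) \<partial>L2)"
        unfolding Q_def by (intro nn_integral_cong) (simp add: power_mult_distrib mult_ac)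
      also have "\<dots> \<le> (\<integral>\<^sup>+p. (ch e)\<^sup>2 * (C0 (2 * b) * AA b F G (fst p) (snd p) e (\<eta> - e)) \<partial>L2)"
        by (intro nn_integral_mono mult_left_mono key_CS b) (simp_all)
      also have "\<dots> = (ch e)\<^sup>2 * C0 (2 * b) * (\<integral>\<^sup>+p. AA b F G (fst p) (snd p) e (\<eta> - e) \<partial>L2)"
        by (subst nn_integral_cmult[symmetric]) (measurable, simp add: mult_ac)
      also have "\<dots> = (ch e)\<^sup>2 * C0 (2 * b) * (sl b F e * sl b G (\<eta> - e))"
        by (simp add: AA_int)
      finally have "esq (\<integral>\<^sup>+p. (Q e p)\<^sup>2 \<partial>L2) \<le> esq ((ch e)\<^sup>2 * C0 (2 * b) * (sl b F e * sl b G (\<eta> - e)))"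
        by (rule esq_mono)
      also have "\<dots> = esq (C0 (2 * b)) * R e"
        unfolding R_def by (simp add: esq_mult mult_ac)
      finally show ?thesis .
    qed
    have "(\<integral>\<^sup>+p. Q e p * Q e' p \<partial>L2) \<le> esq (\<integral>\<^sup>+p. (Q e p)\<^sup>2 \<partial>L2) * esq (\<integral>\<^sup>+p. (Q e' p)\<^sup>2 \<partial>L2)"
      by (rule CS_esq; rule Qm2)
    also have "\<dots> \<le> (esq (C0 (2 * b)) * R e) * (esq (C0 (2 * b)) * R e')"
      by (intro mult_mono bound) simp_all
    finally show "(\<integral>\<^sup>+p. Q e p * Q e' p \<partial>L2) \<le> (esq (C0 (2 * b)) * R e) * (esq (C0 (2 * b)) * R e')" .
  qed
  also have "\<dots> = (\<integral>\<^sup>+e. esq (C0 (2 * b)) * R e \<partial>lborel)\<^sup>2"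
    by (rule sq_integral[symmetric]) measurable
  also have "\<dots> = (esq (C0 (2 * b)) * (\<integral>\<^sup>+e. R e \<partial>lborel))\<^sup>2"
    by (subst nn_integral_cmult) (simp_all add: measurable_lborel1)
  also have "\<dots> = C0 (2 * b) * (\<integral>\<^sup>+e. R e \<partial>lborel)\<^sup>2"
    by (simp add: power_mult_distrib)
  finally show ?thesis unfolding R_def .
qed



lemma L3a:
  fixes h :: "real \<times> real \<times> real \<Rightarrow> ennreal"
  assumes [measurable]: "h \<in> borel_measurable L3"
  shows "(\<integral>\<^sup>+z. h z \<partial>L3) = (\<integral>\<^sup>+e. \<integral>\<^sup>+p. h (fst p, snd p, e) \<partial>L2 \<partial>lborel)"
proof -
  have "(\<integral>\<^sup>+z. h z \<partial>L3) = (\<integral>\<^sup>+t. \<integral>\<^sup>+q. h (t, q) \<partial>L2 \<partial>lborel)"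
    using sigma_finite_measure.nn_integral_fst[OF sf_L2 assms] by simp
  also have "\<dots> = (\<integral>\<^sup>+t. \<integral>\<^sup>+x. \<integral>\<^sup>+e. h (t, x, e) \<partial>lborel \<partial>lborel \<partial>lborel)"
    by (intro nn_integral_cong) (subst L2_iter_fst, simp_all, measurable)
  also have "\<dots> = (\<integral>\<^sup>+t. \<integral>\<^sup>+e. \<integral>\<^sup>+x. h (t, x, e) \<partial>lborel \<partial>lborel \<partial>lborel)"
    by (intro nn_integral_cong lborel_pair.Fubini') measurable
  also have "\<dots> = (\<integral>\<^sup>+e. \<integral>\<^sup>+t. \<integral>\<^sup>+x. h (t, x, e) \<partial>lborel \<partial>lborel \<partial>lborel)"
    by (rule lborel_pair.Fubini'[symmetric]) measurable
  also have "\<dots> = (\<integral>\<^sup>+e. \<integral>\<^sup>+p. h (fst p, snd p, e) \<partial>L2 \<partial>lborel)"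
    by (intro nn_integral_cong) (subst L2_iter_fst, simp_all, measurable)
  finally show ?thesis .
qed

definition NN :: "real \<Rightarrow> (real \<times> real \<times> real \<Rightarrow> ennreal) \<Rightarrow> ennreal" where
  "NN b F = (\<integral>\<^sup>+e. sl b F e \<partial>lborel)"

lemma NN_eq:
  assumes [measurable]: "F \<in> borel_measurable L3"
  shows "NN b F = (\<integral>\<^sup>+z. (W b z * F z)\<^sup>2 \<partial>L3)"
  unfolding NN_def sl_def by (subst L3a) (simp_all, measurable)

lemma bound_general:
  fixes F G :: "real \<times> real \<times> real \<Rightarrow> ennreal"
  assumes [measurable]: "F \<in> borel_measurable L3" "G \<in> borel_measurable L3" "case_prod ch \<in> borel_measurable (lborel \<Otimes>\<^sub>M lborel)"
    "\<omega> \<in> borel_measurable borel"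
    and b: "b \<ge> 0"
  shows "(\<integral>\<^sup>+z. \<omega> (snd (snd z)) * (ennreal \<bar>fst (snd z)\<bar> * (\<integral>\<^sup>+e. ch (snd (snd z)) e * kk F G (fst z) (fst (snd z)) e (snd (snd z) - e) \<partial>lborel)\<^sup>2) \<partial>L3)
     \<le> (\<integral>\<^sup>+\<eta>. \<omega> \<eta> * (C0 (2 * b) * (\<integral>\<^sup>+e. ch \<eta> e * (esq (sl b F e) * esq (sl b G (\<eta> - e))) \<partial>lborel)\<^sup>2) \<partial>lborel)"
proof -
  have "(\<integral>\<^sup>+z. \<omega> (snd (snd z)) * (ennreal \<bar>fst (snd z)\<bar> * (\<integral>\<^sup>+e. ch (snd (snd z)) e * kk F G (fst z) (fst (snd z)) e (snd (snd z) - e) \<partial>lborel)\<^sup>2) \<partial>L3)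
     = (\<integral>\<^sup>+\<eta>. \<integral>\<^sup>+p. \<omega> \<eta> * (ennreal \<bar>snd p\<bar> * (\<integral>\<^sup>+e. ch \<eta> e * kk F G (fst p) (snd p) e (\<eta> - e) \<partial>lborel)\<^sup>2) \<partial>L2 \<partial>lborel)"
    by (subst L3a) (simp_all, measurable)
  also have "\<dots> = (\<integral>\<^sup>+\<eta>. \<omega> \<eta> * (\<integral>\<^sup>+p. ennreal \<bar>snd p\<bar> * (\<integral>\<^sup>+e. ch \<eta> e * kk F G (fst p) (snd p) e (\<eta> - e) \<partial>lborel)\<^sup>2 \<partial>L2) \<partial>lborel)"
    by (intro nn_integral_cong nn_integral_cmult) measurable
  also have "\<dots> \<le> (\<integral>\<^sup>+\<eta>. \<omega> \<eta> * (C0 (2 * b) * (\<integral>\<^sup>+e. ch \<eta> e * (esq (sl b F e) * esq (sl b G (\<eta> - e))) \<partial>lborel)\<^sup>2) \<partial>lborel)"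
    by (intro nn_integral_mono mult_left_mono minkowski_bound b) simp_all
  finally show ?thesis .
qed


lemma conv_int:
  fixes sF sG :: "real \<Rightarrow> ennreal"
  assumes [measurable]: "sF \<in> borel_measurable borel" "sG \<in> borel_measurable borel"
  shows "(\<integral>\<^sup>+\<eta>. \<integral>\<^sup>+e. sF e * sG (\<eta> - e) \<partial>lborel \<partial>lborel) = (\<integral>\<^sup>+e. sF e \<partial>lborel) * (\<integral>\<^sup>+e. sG e \<partial>lborel)"
proof -
  have "(\<integral>\<^sup>+\<eta>. \<integral>\<^sup>+e. sF e * sG (\<eta> - e) \<partial>lborel \<partial>lborel) = (\<integral>\<^sup>+e. \<integral>\<^sup>+\<eta>. sF e * sG (\<eta> - e) \<partial>lborel \<partial>lborel)"
    by (rule lborel_pair.Fubini') measurable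
  also have "\<dots> = (\<integral>\<^sup>+e. sF e * (\<integral>\<^sup>+\<eta>. sG (\<eta> - e) \<partial>lborel) \<partial>lborel)"
    by (intro nn_integral_cong nn_integral_cmult) measurable
  also have "\<dots> = (\<integral>\<^sup>+e. sF e * (\<integral>\<^sup>+\<eta>. sG \<eta> \<partial>lborel) \<partial>lborel)"
  proof -
    have "(\<integral>\<^sup>+\<eta>. sG (\<eta> - e) \<partial>lborel) = (\<integral>\<^sup>+\<eta>. sG \<eta> \<partial>lborel)" for e
      using nn_integral_shift[of sG "-e"] by simp
    then show ?thesis by simp
  qed
  also have "\<dots> = (\<integral>\<^sup>+e. sF e \<partial>lborel) * (\<integral>\<^sup>+e. sG e \<partial>lborel)"
    by (rule nn_integral_multc) measurable
  finally show ?thesis .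
qed

lemma ind_sq: "(indicator I x :: ennreal)\<^sup>2 = indicator I x"
  by (simp add: indicator_def)

lemma CS_ind:
  fixes h :: "real \<Rightarrow> ennreal"
  assumes [measurable]: "h \<in> borel_measurable borel" "J \<in> sets borel"
  shows "(\<integral>\<^sup>+e. indicator J e * h e \<partial>lborel)\<^sup>2 \<le> emeasure lborel J * (\<integral>\<^sup>+e. (h e)\<^sup>2 \<partial>lborel)"
proof -
  have "(\<integral>\<^sup>+e. indicator J e * h e \<partial>lborel) = (\<integral>\<^sup>+e. indicator J e * (indicator J e * h e) \<partial>lborel)"
    by (intro nn_integral_cong) (simp add: indicator_def)
  then have "(\<integral>\<^sup>+e. indicator J e * h e \<partial>lborel)\<^sup>2 \<le> (\<integral>\<^sup>+e. (indicator J e)\<^sup>2 \<partial>lborel) * (\<integral>\<^sup>+e. (indicator J e * h e)\<^sup>2 \<partial>lborel)"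
    using Cauchy_Schwarz_nn_integral[of "indicator J" lborel "\<lambda>e. indicator J e * h e"] by simp
  also have "\<dots> \<le> emeasure lborel J * (\<integral>\<^sup>+e. (h e)\<^sup>2 \<partial>lborel)"
  proof (intro mult_mono nn_integral_mono)
    show "(\<integral>\<^sup>+e. (indicator J e)\<^sup>2 \<partial>lborel) \<le> emeasure lborel J"
      by (simp add: ind_sq)
  qed (auto simp: power_mult_distrib indicator_def)
  finally show ?thesis .
qed

lemma AB_sq:
  "(esq (sl b F e) * esq (sl b G (\<eta> - e)))\<^sup>2 = sl b F e * sl b G (\<eta> - e)"
  by (simp add: power_mult_distrib)

lemma term1:
  fixes F G :: "real \<times> real \<times> real \<Rightarrow> ennreal"
  assumes [measurable]: "F \<in> borel_measurable L3" "G \<in> borel_measurable L3" "I \<in> sets borel"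
    and b: "b \<ge> 0" and L: "emeasure lborel I \<le> L"
  shows "(\<integral>\<^sup>+z. ennreal \<bar>fst (snd z)\<bar> * (\<integral>\<^sup>+e. indicator I e * kk F G (fst z) (fst (snd z)) e (snd (snd z) - e) \<partial>lborel)\<^sup>2 \<partial>L3)
     \<le> C0 (2 * b) * L * (NN b F * NN b G)"
proof -
  have "(\<integral>\<^sup>+z. ennreal \<bar>fst (snd z)\<bar> * (\<integral>\<^sup>+e. indicator I e * kk F G (fst z) (fst (snd z)) e (snd (snd z) - e) \<partial>lborel)\<^sup>2 \<partial>L3)
     = (\<integral>\<^sup>+z. (\<lambda>_. 1) (snd (snd z)) * (ennreal \<bar>fst (snd z)\<bar> * (\<integral>\<^sup>+e. (\<lambda>\<eta> e. indicator I e) (snd (snd z)) e * kk F G (fst z) (fst (snd z)) e (snd (snd z) - e) \<partial>lborel)\<^sup>2) \<partial>L3)"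
    by simp
  also have "\<dots> \<le> (\<integral>\<^sup>+\<eta>. (\<lambda>_. 1) \<eta> * (C0 (2 * b) * (\<integral>\<^sup>+e. (\<lambda>\<eta> e. indicator I e) \<eta> e * (esq (sl b F e) * esq (sl b G (\<eta> - e))) \<partial>lborel)\<^sup>2) \<partial>lborel)"
    by (rule bound_general[OF assms(1,2) _ _ b]) measurable
  also have "\<dots> \<le> (\<integral>\<^sup>+\<eta>. C0 (2 * b) * (L * (\<integral>\<^sup>+e. sl b F e * sl b G (\<eta> - e) \<partial>lborel)) \<partial>lborel)"
  proof (intro nn_integral_mono)
    fix \<eta> :: real
    have "(\<integral>\<^sup>+e. indicator I e * (esq (sl b F e) * esq (sl b G (\<eta> - e))) \<partial>lborel)\<^sup>2
        \<le> emeasure lborel I * (\<integral>\<^sup>+e. (esq (sl b F e) * esq (sl b G (\<eta> - e)))\<^sup>2 \<partial>lborel)"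
      by (rule CS_ind) measurable
    also have "\<dots> \<le> L * (\<integral>\<^sup>+e. sl b F e * sl b G (\<eta> - e) \<partial>lborel)"
      by (intro mult_mono L) (simp_all add: AB_sq)
    finally show "(\<lambda>_. 1) \<eta> * (C0 (2 * b) * (\<integral>\<^sup>+e. (\<lambda>\<eta> e. indicator I e) \<eta> e * (esq (sl b F e) * esq (sl b G (\<eta> - e))) \<partial>lborel)\<^sup>2)
        \<le> C0 (2 * b) * (L * (\<integral>\<^sup>+e. sl b F e * sl b G (\<eta> - e) \<partial>lborel))"
      by (simp add: mult_left_mono)
  qed
  also have "\<dots> = C0 (2 * b) * L * (\<integral>\<^sup>+\<eta>. \<integral>\<^sup>+e. sl b F e * sl b G (\<eta> - e) \<partial>lborel \<partial>lborel)"
    by (simp only: mult.assoc[symmetric]) (rule nn_integral_cmult, measurable)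
  also have "\<dots> = C0 (2 * b) * L * (NN b F * NN b G)"
    unfolding NN_def by (subst conv_int) (simp_all, measurable)
  finally show ?thesis .
qed

lemma ind_reflect:
  assumes [measurable]: "I \<in> sets borel"
  shows "(\<integral>\<^sup>+e. (indicator I ((\<eta>::real) - e) :: ennreal)\<^sup>2 \<partial>lborel) = emeasure lborel I"
proof -
  have "(\<integral>\<^sup>+e. (indicator I (\<eta> - e) :: ennreal)\<^sup>2 \<partial>lborel) = (\<integral>\<^sup>+e. indicator I (\<eta> - e) \<partial>lborel)"
    by (simp add: ind_sq)
  also have "\<dots> = (\<integral>\<^sup>+e. indicator I e \<partial>lborel)"
    by (rule nn_integral_reflect[of "indicator I"]) measurable
  finally show ?thesis by simp
qed

lemma term2:
  fixes F G :: "real \<times> real \<times> real \<Rightarrow> ennreal"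
  assumes [measurable]: "F \<in> borel_measurable L3" "G \<in> borel_measurable L3" "I \<in> sets borel"
    and b: "b \<ge> 0" and L: "emeasure lborel I \<le> L"
  shows "(\<integral>\<^sup>+z. ennreal \<bar>fst (snd z)\<bar> * (\<integral>\<^sup>+e. indicator I (snd (snd z) - e) * kk F G (fst z) (fst (snd z)) e (snd (snd z) - e) \<partial>lborel)\<^sup>2 \<partial>L3)
     \<le> C0 (2 * b) * L * (NN b F * NN b G)"
proof -
  have "(\<integral>\<^sup>+z. ennreal \<bar>fst (snd z)\<bar> * (\<integral>\<^sup>+e. indicator I (snd (snd z) - e) * kk F G (fst z) (fst (snd z)) e (snd (snd z) - e) \<partial>lborel)\<^sup>2 \<partial>L3)
     = (\<integral>\<^sup>+z. (\<lambda>_. 1) (snd (snd z)) * (ennreal \<bar>fst (snd z)\<bar> * (\<integral>\<^sup>+e. (\<lambda>\<eta> e. indicator I (\<eta> - e)) (snd (snd z)) e * kk F G (fst z) (fst (snd z)) e (snd (snd z) - e) \<partial>lborel)\<^sup>2) \<partial>L3)"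
    by simp
  also have "\<dots> \<le> (\<integral>\<^sup>+\<eta>. (\<lambda>_. 1) \<eta> * (C0 (2 * b) * (\<integral>\<^sup>+e. (\<lambda>\<eta> e. indicator I (\<eta> - e)) \<eta> e * (esq (sl b F e) * esq (sl b G (\<eta> - e))) \<partial>lborel)\<^sup>2) \<partial>lborel)"
    by (rule bound_general[OF assms(1,2) _ _ b]) measurable
  also have "\<dots> \<le> (\<integral>\<^sup>+\<eta>. C0 (2 * b) * (L * (\<integral>\<^sup>+e. sl b F e * sl b G (\<eta> - e) \<partial>lborel)) \<partial>lborel)"
  proof (intro nn_integral_mono)
    fix \<eta> :: real
    have "(\<integral>\<^sup>+e. indicator I (\<eta> - e) * (esq (sl b F e) * esq (sl b G (\<eta> - e))) \<partial>lborel)\<^sup>2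
        \<le> (\<integral>\<^sup>+e. (indicator I (\<eta> - e))\<^sup>2 \<partial>lborel) * (\<integral>\<^sup>+e. (esq (sl b F e) * esq (sl b G (\<eta> - e)))\<^sup>2 \<partial>lborel)"
      by (rule Cauchy_Schwarz_nn_integral) measurable
    also have "\<dots> \<le> L * (\<integral>\<^sup>+e. sl b F e * sl b G (\<eta> - e) \<partial>lborel)"
      by (intro mult_mono) (simp_all add: AB_sq ind_reflect L)
    finally show "(\<lambda>_. 1) \<eta> * (C0 (2 * b) * (\<integral>\<^sup>+e. (\<lambda>\<eta> e. indicator I (\<eta> - e)) \<eta> e * (esq (sl b F e) * esq (sl b G (\<eta> - e))) \<partial>lborel)\<^sup>2)
        \<le> C0 (2 * b) * (L * (\<integral>\<^sup>+e. sl b F e * sl b G (\<eta> - e) \<partial>lborel))"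
      by (simp add: mult_left_mono)
  qed
  also have "\<dots> = C0 (2 * b) * L * (\<integral>\<^sup>+\<eta>. \<integral>\<^sup>+e. sl b F e * sl b G (\<eta> - e) \<partial>lborel \<partial>lborel)"
    by (simp only: mult.assoc[symmetric]) (rule nn_integral_cmult, measurable)
  also have "\<dots> = C0 (2 * b) * L * (NN b F * NN b G)"
    unfolding NN_def by (subst conv_int) (simp_all, measurable)
  finally show ?thesis .
qed

lemma term3:
  fixes F G :: "real \<times> real \<times> real \<Rightarrow> ennreal"
  assumes [measurable]: "F \<in> borel_measurable L3" "G \<in> borel_measurable L3" "I \<in> sets borel"
    and b: "b \<ge> 0" and L: "emeasure lborel I \<le> L"
  shows "(\<integral>\<^sup>+z. indicator I (snd (snd z)) * (ennreal \<bar>fst (snd z)\<bar> * (\<integral>\<^sup>+e. kk F G (fst z) (fst (snd z)) e (snd (snd z) - e) \<partial>lborel)\<^sup>2) \<partial>L3)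
     \<le> C0 (2 * b) * L * (NN b F * NN b G)"
proof -
  have "(\<integral>\<^sup>+z. indicator I (snd (snd z)) * (ennreal \<bar>fst (snd z)\<bar> * (\<integral>\<^sup>+e. kk F G (fst z) (fst (snd z)) e (snd (snd z) - e) \<partial>lborel)\<^sup>2) \<partial>L3)
     = (\<integral>\<^sup>+z. indicator I (snd (snd z)) * (ennreal \<bar>fst (snd z)\<bar> * (\<integral>\<^sup>+e. (\<lambda>\<eta> e. 1) (snd (snd z)) e * kk F G (fst z) (fst (snd z)) e (snd (snd z) - e) \<partial>lborel)\<^sup>2) \<partial>L3)"
    by simp
  also have "\<dots> \<le> (\<integral>\<^sup>+\<eta>. indicator I \<eta> * (C0 (2 * b) * (\<integral>\<^sup>+e. (\<lambda>\<eta> e. 1) \<eta> e * (esq (sl b F e) * esq (sl b G (\<eta> - e))) \<partial>lborel)\<^sup>2) \<partial>lborel)"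
    by (rule bound_general[OF assms(1,2) _ _ b]) measurable
  also have "\<dots> \<le> (\<integral>\<^sup>+\<eta>. (C0 (2 * b) * (NN b F * NN b G)) * indicator I \<eta> \<partial>lborel)"
  proof (intro nn_integral_mono)
    fix \<eta> :: real
    have "(\<integral>\<^sup>+e. esq (sl b F e) * esq (sl b G (\<eta> - e)) \<partial>lborel)\<^sup>2
        \<le> (\<integral>\<^sup>+e. (esq (sl b F e))\<^sup>2 \<partial>lborel) * (\<integral>\<^sup>+e. (esq (sl b G (\<eta> - e)))\<^sup>2 \<partial>lborel)"
      by (rule Cauchy_Schwarz_nn_integral) measurable
    also have "(\<integral>\<^sup>+e. (esq (sl b G (\<eta> - e)))\<^sup>2 \<partial>lborel) = NN b G"
      unfolding NN_def esq_sq by (rule nn_integral_reflect) measurable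
    finally have "(\<integral>\<^sup>+e. esq (sl b F e) * esq (sl b G (\<eta> - e)) \<partial>lborel)\<^sup>2 \<le> NN b F * NN b G"
      unfolding esq_sq NN_def .
    then show "indicator I \<eta> * (C0 (2 * b) * (\<integral>\<^sup>+e. (\<lambda>\<eta> e. 1) \<eta> e * (esq (sl b F e) * esq (sl b G (\<eta> - e))) \<partial>lborel)\<^sup>2)
        \<le> (C0 (2 * b) * (NN b F * NN b G)) * indicator I \<eta>"
      by (simp add: mult_left_mono mult.commute)
  qed
  also have "\<dots> = C0 (2 * b) * (NN b F * NN b G) * emeasure lborel I"
    by (simp add: nn_integral_cmult_indicator)
  also have "\<dots> \<le> C0 (2 * b) * (NN b F * NN b G) * L"
    by (intro mult_left_mono L) simp
  finally show ?thesis by (simp add: mult_ac)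
qed


lemma lborel3: "(lborel :: (real \<times> real \<times> real) measure) = L3"
  by (simp add: lborel_prod)

lemma meas_L3: "f \<in> borel_measurable lborel \<Longrightarrow> f \<in> borel_measurable L3"
  by (simp add: lborel3)

lemma minus3_eq[simp]: "(z::real\<times>real\<times>real) - (a, b, c) = (fst z - a, fst (snd z) - b, snd (snd z) - c)"
  by (simp add: prod_eq_iff)

lemma minus3_meas1[measurable]: "((-) (z::real\<times>real\<times>real)) \<in> measurable (borel \<Otimes>\<^sub>M borel \<Otimes>\<^sub>M borel) (borel \<Otimes>\<^sub>M borel \<Otimes>\<^sub>M borel)"
proof -
  have "((-) z) = (\<lambda>z1. (fst z - fst z1, fst (snd z) - fst (snd z1), snd (snd z) - snd (snd z1)))"
    by (auto simp: fun_eq_iff)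
  then show ?thesis by simp
qed

lemma minus3_meas2[measurable]: "((-) (z::real\<times>real\<times>real)) \<in> measurable L3 L3"
  using minus3_meas1[of z] by simp

definition Kx :: "(real \<times> real \<times> real \<Rightarrow> complex) \<Rightarrow> (real \<times> real \<times> real \<Rightarrow> complex) \<Rightarrow> real \<times> real \<times> real \<Rightarrow> ennreal" where
  "Kx f g z = (\<integral>\<^sup>+z1. ennreal (cmod (bilx_integrand f g z z1)) \<partial>L3)"

lemma bilx_hat_bound:
  "ennreal ((cmod (bilx_hat f g z))\<^sup>2) \<le> ennreal \<bar>fst (snd z)\<bar> * (Kx f g z)\<^sup>2"
proof -
  have "ennreal (cmod (integral\<^sup>L lborel (bilx_integrand f g z))) \<le> Kx f g z"
  proof (cases "integrable lborel (bilx_integrand f g z)")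
    case True
    then show ?thesis unfolding Kx_def lborel3[symmetric] by (rule integral_norm_bound_ennreal)
  next
    case False
    then show ?thesis by (simp add: not_integrable_integral_eq)
  qed
  then have "(ennreal (cmod (integral\<^sup>L lborel (bilx_integrand f g z))))\<^sup>2 \<le> (Kx f g z)\<^sup>2"
    by (rule power_mono_ennreal)
  then have "ennreal \<bar>fst (snd z)\<bar> * (ennreal (cmod (integral\<^sup>L lborel (bilx_integrand f g z))))\<^sup>2 \<le> ennreal \<bar>fst (snd z)\<bar> * (Kx f g z)\<^sup>2"
    by (rule mult_left_mono) simp
  moreover have "ennreal ((cmod (bilx_hat f g z))\<^sup>2) = ennreal \<bar>fst (snd z)\<bar> * (ennreal (cmod (integral\<^sup>L lborel (bilx_integrand f g z))))\<^sup>2"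
    unfolding bilx_hat_def
    by (simp add: norm_mult power_mult_distrib ennreal_mult ennreal_power powr_half_sqrt)
  ultimately show ?thesis by simp
qed

lemma Kx_eq:
  assumes [measurable]: "f \<in> borel_measurable L3" "g \<in> borel_measurable L3"
  shows "Kx f g z = (\<integral>\<^sup>+e. kk (\<lambda>z. ennreal (cmod (f z))) (\<lambda>z. ennreal (cmod (g z))) (fst z) (fst (snd z)) e (snd (snd z) - e) \<partial>lborel)"
  unfolding Kx_def
proof (subst L3a)
  show "(\<lambda>z1. ennreal (cmod (bilx_integrand f g z z1))) \<in> borel_measurable L3"
    unfolding bilx_integrand_def by measurable
  show "(\<integral>\<^sup>+e. \<integral>\<^sup>+p. ennreal (cmod (bilx_integrand f g z (fst p, snd p, e))) \<partial>L2 \<partial>lborel) =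
    (\<integral>\<^sup>+e. kk (\<lambda>z. ennreal (cmod (f z))) (\<lambda>z. ennreal (cmod (g z))) (fst z) (fst (snd z)) e (snd (snd z) - e) \<partial>lborel)"
    unfolding kk_def bilx_integrand_def
    by (intro nn_integral_cong) (simp add: norm_mult ennreal_mult)
qed

lemma cmod_Py: "ennreal (cmod (Py_hat I f z)) = indicator I (snd (snd z)) * ennreal (cmod (f z))"
  by (cases z) (simp add: Py_hat_def indicator_def)

lemma kk_indF: "kk (\<lambda>z. indicator I (snd (snd z)) * F z) G t x e e2 = indicator I e * kk F G t x e e2"
  by (cases "e \<in> I") (simp_all add: kk_def)

lemma kk_indG: "kk F (\<lambda>z. indicator I (snd (snd z)) * G z) t x e e2 = indicator I e2 * kk F G t x e e2"
  by (cases "e2 \<in> I") (simp_all add: kk_def)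

lemma Py_meas[measurable]:
  assumes [measurable]: "f \<in> borel_measurable L3" "I \<in> sets borel"
  shows "Py_hat I f \<in> borel_measurable L3"
proof -
  have "Py_hat I f = (\<lambda>z. if snd (snd z) \<in> I then f z else 0)"
    by (auto simp: Py_hat_def fun_eq_iff split: prod.splits)
  moreover have "(\<lambda>z. if snd (snd z) \<in> I then f z else 0) \<in> borel_measurable L3"
    by measurable
  ultimately show ?thesis by simp
qed

lemma l2sq_le:
  "l2sq (bilx_hat f g) \<le> (\<integral>\<^sup>+z. ennreal \<bar>fst (snd z)\<bar> * (Kx f g z)\<^sup>2 \<partial>L3)"
  unfolding l2sq_def lborel3 by (intro nn_integral_mono bilx_hat_bound)

definition FF :: "(real \<times> real \<times> real \<Rightarrow> complex) \<Rightarrow> real \<times> real \<times> real \<Rightarrow> ennreal" where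
  "FF f z = ennreal (cmod (f z))"

lemma FF_meas[measurable]:
  assumes [measurable]: "f \<in> borel_measurable L3"
  shows "FF f \<in> borel_measurable L3"
  unfolding FF_def by measurable

lemma FF_Py: "FF (Py_hat I f) = (\<lambda>z. indicator I (snd (snd z)) * FF f z)"
  by (simp add: fun_eq_iff FF_def cmod_Py)

lemma l2_term1:
  assumes [measurable]: "f \<in> borel_measurable L3" "g \<in> borel_measurable L3" "I \<in> sets borel"
    and b: "b \<ge> 0" and L: "emeasure lborel I \<le> L"
  shows "l2sq (bilx_hat (Py_hat I f) g) \<le> C0 (2 * b) * L * (NN b (FF f) * NN b (FF g))"
proof -
  have "l2sq (bilx_hat (Py_hat I f) g) \<le> (\<integral>\<^sup>+z. ennreal \<bar>fst (snd z)\<bar> * (Kx (Py_hat I f) g z)\<^sup>2 \<partial>L3)"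
    by (rule l2sq_le)
  also have "\<dots> = (\<integral>\<^sup>+z. ennreal \<bar>fst (snd z)\<bar> * (\<integral>\<^sup>+e. indicator I e * kk (FF f) (FF g) (fst z) (fst (snd z)) e (snd (snd z) - e) \<partial>lborel)\<^sup>2 \<partial>L3)"
    by (subst Kx_eq) (simp_all add: FF_def[symmetric] FF_Py kk_indF)
  also have "\<dots> \<le> C0 (2 * b) * L * (NN b (FF f) * NN b (FF g))"
    by (rule term1[OF _ _ _ b L]) measurable
  finally show ?thesis .
qed

lemma l2_term2:
  assumes [measurable]: "f \<in> borel_measurable L3" "g \<in> borel_measurable L3" "I \<in> sets borel"
    and b: "b \<ge> 0" and L: "emeasure lborel I \<le> L"
  shows "l2sq (bilx_hat f (Py_hat I g)) \<le> C0 (2 * b) * L * (NN b (FF f) * NN b (FF g))"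
proof -
  have "l2sq (bilx_hat f (Py_hat I g)) \<le> (\<integral>\<^sup>+z. ennreal \<bar>fst (snd z)\<bar> * (Kx f (Py_hat I g) z)\<^sup>2 \<partial>L3)"
    by (rule l2sq_le)
  also have "\<dots> = (\<integral>\<^sup>+z. ennreal \<bar>fst (snd z)\<bar> * (\<integral>\<^sup>+e. indicator I (snd (snd z) - e) * kk (FF f) (FF g) (fst z) (fst (snd z)) e (snd (snd z) - e) \<partial>lborel)\<^sup>2 \<partial>L3)"
    by (subst Kx_eq) (simp_all add: FF_def[symmetric] FF_Py kk_indG)
  also have "\<dots> \<le> C0 (2 * b) * L * (NN b (FF f) * NN b (FF g))"
    by (rule term2[OF _ _ _ b L]) measurable
  finally show ?thesis .
qed

lemma l2_term3:
  assumes [measurable]: "f \<in> borel_measurable L3" "g \<in> borel_measurable L3" "I \<in> sets borel"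
    and b: "b \<ge> 0" and L: "emeasure lborel I \<le> L"
  shows "l2sq (Py_hat I (bilx_hat f g)) \<le> C0 (2 * b) * L * (NN b (FF f) * NN b (FF g))"
proof -
  have "l2sq (Py_hat I (bilx_hat f g)) = (\<integral>\<^sup>+z. indicator I (snd (snd z)) * ennreal ((cmod (bilx_hat f g z))\<^sup>2) \<partial>L3)"
    unfolding l2sq_def lborel3
    by (intro nn_integral_cong) (auto simp: Py_hat_def indicator_def split: prod.splits)
  also have "\<dots> \<le> (\<integral>\<^sup>+z. indicator I (snd (snd z)) * (ennreal \<bar>fst (snd z)\<bar> * (Kx f g z)\<^sup>2) \<partial>L3)"
    by (intro nn_integral_mono mult_left_mono bilx_hat_bound) simp
  also have "\<dots> = (\<integral>\<^sup>+z. indicator I (snd (snd z)) * (ennreal \<bar>fst (snd z)\<bar> * (\<integral>\<^sup>+e. kk (FF f) (FF g) (fst z) (fst (snd z)) e (snd (snd z) - e) \<partial>lborel)\<^sup>2) \<partial>L3)"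
    by (subst Kx_eq) (simp_all add: FF_def[symmetric])
  also have "\<dots> \<le> C0 (2 * b) * L * (NN b (FF f) * NN b (FF g))"
    by (rule term3[OF _ _ _ b L]) measurable
  finally show ?thesis .
qed


lemma jb2_pos: "jb2 x y > 0"
  unfolding jb2_def by (simp add: add_pos_nonneg)

lemma NN_Xsb:
  assumes [measurable]: "f \<in> borel_measurable L3"
  shows "NN b (FF f) = Xsb_sq 0 b f"
  unfolding NN_eq[OF FF_meas[OF assms]] Xsb_sq_def lborel3
proof (intro nn_integral_cong)
  fix z :: "real \<times> real \<times> real"
  obtain t x y where z: "z = (t, x, y)" by (cases z) auto
  have "Xsb_weight 0 b z = jb (t - x ^ 3 - y ^ 3) powr b"
    unfolding z Xsb_weight_def using jb2_pos[of x y] by simp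
  then show "(W b z * FF f z)\<^sup>2 = ennreal ((Xsb_weight 0 b z * cmod (f z))\<^sup>2)"
    unfolding W_def FF_def z by (subst ennreal_mult[symmetric]) (auto simp: ennreal_power)
qed

lemma C0_fin:
  assumes "\<beta> > 1"
  shows "C0 \<beta> < \<infinity>"
  using Cb_finite[OF assms] unfolding C0_def
  by (auto simp: ennreal_mult_less_top)

lemma bounded_interval_props:
  assumes "bounded_interval I a c"
  shows "I \<in> sets borel" "emeasure lborel I \<le> ennreal (c - a)" "a \<le> c"
proof -
  have ac: "a \<le> c" "{a<..<c} \<subseteq> I" "I \<subseteq> {a..c}" using assms by (auto simp: bounded_interval_def)
  have "I = {a<..<c} \<union> (I \<inter> {a, c})" using ac by auto
  moreover have "finite (I \<inter> {a, c})" by simp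
  ultimately show "I \<in> sets borel"
    by (metis borel_open open_greaterThanLessThan finite_imp_closed borel_closed sets.Un)
  have "emeasure lborel I \<le> emeasure lborel {a..c}" using ac by (intro emeasure_mono) auto
  then show "emeasure lborel I \<le> ennreal (c - a)" using ac by simp
  show "a \<le> c" by (fact ac)
qed

lemma AE_xi_nonzero: "AE z in L3. fst (snd z) \<noteq> 0"
proof (rule AE_I')
  have "emeasure L2 ({0} \<times> UNIV) = emeasure lborel {0::real} * emeasure lborel (UNIV :: real set)"
    by (rule lborel.emeasure_pair_measure_Times) auto
  then have e2: "emeasure L2 ({0} \<times> UNIV) = 0" by simp
  have "emeasure L3 (UNIV \<times> ({0} \<times> UNIV)) = emeasure lborel (UNIV :: real set) * emeasure L2 ({0::real} \<times> (UNIV :: real set))"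
    by (rule sigma_finite_measure.emeasure_pair_measure_Times[OF sf_L2]) auto
  then have "emeasure L3 (UNIV \<times> ({0} \<times> UNIV)) = 0" using e2 by simp
  moreover have "UNIV \<times> ({0::real} \<times> (UNIV :: real set)) \<in> sets L3" by auto
  ultimately show "UNIV \<times> ({0::real} \<times> (UNIV :: real set)) \<in> null_sets L3" by auto
  show "{z \<in> space L3. \<not> fst (snd z) \<noteq> 0} \<subseteq> UNIV \<times> ({0} \<times> UNIV)" by auto
qed

lemma Kx_AE_fin:
  assumes [measurable]: "f \<in> borel_measurable L3" "g \<in> borel_measurable L3"
    and b: "b \<ge> 0" and fin: "NN b (FF f) < \<infinity>" "NN b (FF g) < \<infinity>" "C0 (2 * b) < \<infinity>"
  shows "AE z in L3. Kx f g z < \<infinity>"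
proof -
  define h where "h = (\<lambda>(n::nat) (z::real \<times> real \<times> real). indicator {- real n..real n} (snd (snd z)) * (ennreal \<bar>fst (snd z)\<bar> * (\<integral>\<^sup>+e. kk (FF f) (FF g) (fst z) (fst (snd z)) e (snd (snd z) - e) \<partial>lborel)\<^sup>2))"
  have hKx: "h n z = indicator {- real n..real n} (snd (snd z)) * (ennreal \<bar>fst (snd z)\<bar> * (Kx f g z)\<^sup>2)" for n z
    unfolding h_def by (subst Kx_eq) (simp_all add: FF_def[symmetric])
  have "AE z in L3. h n z \<noteq> \<infinity>" for n
  proof (rule nn_integral_noteq_infinite)
    show "h n \<in> borel_measurable L3" unfolding h_def by measurable
    have em: "emeasure lborel {- real n..real n} \<le> ennreal (2 * real n)" by simp
    have "integral\<^sup>N L3 (h n) \<le> C0 (2 * b) * ennreal (2 * real n) * (NN b (FF f) * NN b (FF g))"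
      unfolding h_def using term3[OF FF_meas[OF assms(1)] FF_meas[OF assms(2)] _ b em] by simp
    also have "\<dots> < \<infinity>" using fin by (simp add: ennreal_mult_less_top)
    finally show "integral\<^sup>N L3 (h n) \<noteq> \<infinity>" by simp
  qed
  then have "AE z in L3. \<forall>n. h n z \<noteq> \<infinity>" by (simp add: AE_all_countable)
  then show ?thesis using AE_xi_nonzero
  proof eventually_elim
    case (elim z)
    define n where "n = nat \<lceil>\<bar>snd (snd z)\<bar>\<rceil>"
    have "\<bar>snd (snd z)\<bar> \<le> real n" unfolding n_def by (rule real_nat_ceiling_ge)
    then have "snd (snd z) \<in> {- real n..real n}" by (auto simp: abs_le_iff)
    then have "ennreal \<bar>fst (snd z)\<bar> * (Kx f g z)\<^sup>2 \<noteq> \<infinity>" using elim(1) hKx[of n z] by auto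
    then have "(Kx f g z)\<^sup>2 \<noteq> \<infinity>" using elim(2) by (auto simp: ennreal_mult_eq_top_iff)
    then show ?case by (simp add: power_eq_top_ennreal top.not_eq_extremum)
  qed
qed

lemma bilx_integrand_meas[measurable]:
  assumes [measurable]: "f \<in> borel_measurable L3" "g \<in> borel_measurable L3"
  shows "bilx_integrand f g z \<in> borel_measurable L3"
  unfolding bilx_integrand_def by measurable

lemma bilx_defined_of:
  assumes [measurable]: "f \<in> borel_measurable L3" "g \<in> borel_measurable L3"
    and ae: "AE z in L3. Kx f g z < \<infinity>"
  shows "bilx_defined f g"
  unfolding bilx_defined_def lborel3 using ae
proof eventually_elim
  case (elim z)
  show ?case
    by (rule integrableI_bounded) (use elim in \<open>simp_all add: Kx_def\<close>)
qed

lemma Kx_mono: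
  assumes "\<And>z. cmod (f' z) \<le> cmod (f z)" "\<And>z. cmod (g' z) \<le> cmod (g z)"
  shows "Kx f' g' z \<le> Kx f g z"
  unfolding Kx_def bilx_integrand_def
  by (intro nn_integral_mono ennreal_leI) (auto simp: norm_mult intro!: mult_mono assms)

lemma cmod_Py_le: "cmod (Py_hat I f z) \<le> cmod (f z)"
  by (cases z) (simp add: Py_hat_def)


lemma l2norm_le:
  assumes le: "l2sq X \<le> K * ennreal L * (Nf * Ng)" and fin: "K < \<infinity>" "Nf < \<infinity>" "Ng < \<infinity>" and L: "L \<ge> 0"
  shows "l2norm X \<le> sqrt (enn2real K) * sqrt L * sqrt (enn2real Nf) * sqrt (enn2real Ng)"
proof -
  have "K * ennreal L * (Nf * Ng) < top" using fin by (simp add: ennreal_mult_less_top)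
  then have "enn2real (l2sq X) \<le> enn2real (K * ennreal L * (Nf * Ng))"
    by (intro enn2real_mono le)
  also have "\<dots> = enn2real K * L * (enn2real Nf * enn2real Ng)"
    using L by (simp add: enn2real_mult)
  finally have "sqrt (enn2real (l2sq X)) \<le> sqrt (enn2real K * L * (enn2real Nf * enn2real Ng))"
    by (rule real_sqrt_le_mono)
  then show ?thesis unfolding l2norm_def by (simp add: real_sqrt_mult mult_ac)
qed

lemma x_part:
  fixes b :: real
  assumes b: "b > 1/2"
  shows "\<exists>C>0. \<forall>I a c f g. bounded_interval I a c \<and> in_Xsb 0 b f \<and> in_Xsb 0 b g \<longrightarrow>
     (bilx_defined (Py_hat I f) g \<and> bilx_defined f (Py_hat I g) \<and> bilx_defined f g \<and>
      l2sq (bilx_hat (Py_hat I f) g) < \<infinity> \<and> l2sq (bilx_hat f (Py_hat I g)) < \<infinity> \<and>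
      l2sq (Py_hat I (bilx_hat f g)) < \<infinity> \<and>
      l2norm (bilx_hat (Py_hat I f) g) + l2norm (bilx_hat f (Py_hat I g))
        + l2norm (Py_hat I (bilx_hat f g))
        \<le> C * sqrt (c - a) * Xsb_norm 0 b f * Xsb_norm 0 b g)"
proof -
  define K where "K = C0 (2 * b)"
  have Kfin: "K < \<infinity>" unfolding K_def by (rule C0_fin) (use b in simp)
  have b0: "b \<ge> 0" using b by simp
  define C where "C = 3 * sqrt (enn2real K) + 1"
  have Cpos: "C > 0" unfolding C_def by (simp add: add_nonneg_pos)
  show ?thesis
  proof (intro exI[of _ C] conjI Cpos allI impI)
    fix I a c f g
    assume asm: "bounded_interval I a c \<and> in_Xsb 0 b f \<and> in_Xsb 0 b g"
    have fm[measurable]: "f \<in> borel_measurable L3" and gm[measurable]: "g \<in> borel_measurable L3"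
      using asm by (auto simp: in_Xsb_def intro: meas_L3)
    have Iprops: "I \<in> sets borel" "emeasure lborel I \<le> ennreal (c - a)" "a \<le> c"
      using bounded_interval_props asm by auto
    note [measurable] = Iprops(1)
    have Nf: "NN b (FF f) < \<infinity>" and Ng: "NN b (FF g) < \<infinity>"
      using asm by (auto simp: NN_Xsb in_Xsb_def)
    have AEfin: "AE z in L3. Kx f g z < \<infinity>"
      by (rule Kx_AE_fin[OF _ _ b0 Nf Ng]) (use Kfin K_def in auto)
    show "bilx_defined f g"
      by (rule bilx_defined_of[OF fm gm AEfin])
    have k1: "Kx (Py_hat I f) g z \<le> Kx f g z" for z by (rule Kx_mono) (simp_all add: cmod_Py_le)
    have k2: "Kx f (Py_hat I g) z \<le> Kx f g z" for z by (rule Kx_mono) (simp_all add: cmod_Py_le)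
    have "AE z in L3. Kx (Py_hat I f) g z < \<infinity>" using AEfin by (rule eventually_mono) (rule le_less_trans[OF k1])
    then show "bilx_defined (Py_hat I f) g"
      by (rule bilx_defined_of[OF Py_meas[OF fm Iprops(1)] gm])
    have "AE z in L3. Kx f (Py_hat I g) z < \<infinity>" using AEfin by (rule eventually_mono) (rule le_less_trans[OF k2])
    then show "bilx_defined f (Py_hat I g)"
      by (rule bilx_defined_of[OF fm Py_meas[OF gm Iprops(1)]])
    have t1: "l2sq (bilx_hat (Py_hat I f) g) \<le> K * ennreal (c - a) * (NN b (FF f) * NN b (FF g))"
      unfolding K_def by (rule l2_term1[OF _ _ _ b0 Iprops(2)]) measurable
    have t2: "l2sq (bilx_hat f (Py_hat I g)) \<le> K * ennreal (c - a) * (NN b (FF f) * NN b (FF g))"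
      unfolding K_def by (rule l2_term2[OF _ _ _ b0 Iprops(2)]) measurable
    have t3: "l2sq (Py_hat I (bilx_hat f g)) \<le> K * ennreal (c - a) * (NN b (FF f) * NN b (FF g))"
      unfolding K_def by (rule l2_term3[OF _ _ _ b0 Iprops(2)]) measurable
    have Bfin: "K * ennreal (c - a) * (NN b (FF f) * NN b (FF g)) < \<infinity>"
      using Kfin Nf Ng by (simp add: ennreal_mult_less_top)
    show "l2sq (bilx_hat (Py_hat I f) g) < \<infinity>" using t1 Bfin by (rule le_less_trans)
    show "l2sq (bilx_hat f (Py_hat I g)) < \<infinity>" using t2 Bfin by (rule le_less_trans)
    show "l2sq (Py_hat I (bilx_hat f g)) < \<infinity>" using t3 Bfin by (rule le_less_trans)
    define M where "M = sqrt (enn2real K) * sqrt (c - a) * sqrt (enn2real (NN b (FF f))) * sqrt (enn2real (NN b (FF g)))"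
    have ca: "c - a \<ge> 0" using Iprops by simp
    have n1: "l2norm (bilx_hat (Py_hat I f) g) \<le> M" unfolding M_def by (rule l2norm_le[OF t1 Kfin Nf Ng ca])
    have n2: "l2norm (bilx_hat f (Py_hat I g)) \<le> M" unfolding M_def by (rule l2norm_le[OF t2 Kfin Nf Ng ca])
    have n3: "l2norm (Py_hat I (bilx_hat f g)) \<le> M" unfolding M_def by (rule l2norm_le[OF t3 Kfin Nf Ng ca])
    have Xf: "Xsb_norm 0 b f = sqrt (enn2real (NN b (FF f)))" and Xg: "Xsb_norm 0 b g = sqrt (enn2real (NN b (FF g)))"
      by (simp_all add: Xsb_norm_def NN_Xsb)
    define R where "R = sqrt (c - a) * Xsb_norm 0 b f * Xsb_norm 0 b g"
    have R0: "R \<ge> 0" unfolding R_def Xsb_norm_def using ca by simp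
    have MR: "M = sqrt (enn2real K) * R" unfolding M_def R_def Xf Xg by (simp add: mult_ac)
    have "l2norm (bilx_hat (Py_hat I f) g) + l2norm (bilx_hat f (Py_hat I g)) + l2norm (Py_hat I (bilx_hat f g)) \<le> 3 * M"
      using n1 n2 n3 by simp
    also have "\<dots> \<le> C * R" unfolding MR C_def using R0 by (simp add: algebra_simps)
    finally show "l2norm (bilx_hat (Py_hat I f) g) + l2norm (bilx_hat f (Py_hat I g)) + l2norm (Py_hat I (bilx_hat f g))
        \<le> C * sqrt (c - a) * Xsb_norm 0 b f * Xsb_norm 0 b g" unfolding R_def by (simp add: mult_ac)
  qed
qed


lemma minus3_split: "(z::real\<times>real\<times>real) - z1 = (fst z - fst z1, fst (snd z) - fst (snd z1), snd (snd z) - snd (snd z1))"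
  by (simp add: prod_eq_iff)

lemma bilx_hat_meas[measurable]:
  assumes [measurable]: "f \<in> borel_measurable L3" "g \<in> borel_measurable L3"
  shows "bilx_hat f g \<in> borel_measurable L3"
  unfolding bilx_hat_def bilx_integrand_def lborel3 minus3_split by measurable

definition Sw :: "real \<times> real \<times> real \<Rightarrow> real \<times> real \<times> real" where
  "Sw z = (fst z, snd (snd z), fst (snd z))"

lemma Sw_meas[measurable]: "Sw \<in> L3 \<rightarrow>\<^sub>M L3"
  unfolding Sw_def by measurable

lemma Sw_Sw[simp]: "Sw (Sw z) = z"
  by (simp add: Sw_def)

lemma Sw_minus: "Sw (z - z1) = Sw z - Sw z1"
  by (simp add: Sw_def minus3_split)

lemma distr_Sw: "distr L3 L3 Sw = L3"
proof -
  have sw: "distr L2 L2 (\<lambda>(x, y). (y, x)) = L2"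
    by (rule lborel_pair.distr_pair_swap[symmetric])
  have "distr lborel lborel (\<lambda>x. x) \<Otimes>\<^sub>M distr L2 L2 (\<lambda>(x, y). (y, x)) = distr (lborel \<Otimes>\<^sub>M L2) (lborel \<Otimes>\<^sub>M L2) (\<lambda>(x, y). (x, (\<lambda>(x, y). (y, x)) y))"
    by (rule pair_measure_distr) (measurable, simp add: sw sf_L2)
  moreover have "(\<lambda>(x, y). (x, (\<lambda>(x, y). (y, x)) y)) = Sw"
    by (auto simp: fun_eq_iff Sw_def)
  ultimately show ?thesis using sw by (metis distr_id)
qed

lemma nn_Sw:
  assumes [measurable]: "h \<in> borel_measurable L3"
  shows "(\<integral>\<^sup>+z. h (Sw z) \<partial>L3) = (\<integral>\<^sup>+z. h z \<partial>L3)"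
  using nn_integral_distr[of Sw L3 L3 h] by (simp add: distr_Sw)

lemma int_Sw:
  fixes h :: "real \<times> real \<times> real \<Rightarrow> complex"
  assumes [measurable]: "h \<in> borel_measurable L3"
  shows "(\<integral>z. h (Sw z) \<partial>L3) = (\<integral>z. h z \<partial>L3)"
  using integral_distr[of Sw L3 L3 h] by (simp add: distr_Sw)

lemma integrable_Sw:
  fixes h :: "real \<times> real \<times> real \<Rightarrow> complex"
  assumes [measurable]: "h \<in> borel_measurable L3"
  shows "integrable L3 (\<lambda>z. h (Sw z)) \<longleftrightarrow> integrable L3 h"
  using integrable_distr_eq[of Sw L3 L3 h] by (simp add: distr_Sw)

lemma AE_Sw:
  assumes "AE z in L3. P z"
  shows "AE z in L3. P (Sw z)"
  by (rule AE_distrD[OF Sw_meas]) (subst distr_Sw, rule assms)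

lemma bily_integrand_Sw:
  "bily_integrand f g z z1 = bilx_integrand (\<lambda>z. f (Sw z)) (\<lambda>z. g (Sw z)) (Sw z) (Sw z1)"
  unfolding bily_integrand_def bilx_integrand_def by (simp add: Sw_minus[symmetric]) (simp add: Sw_def)

lemma bily_hat_Sw:
  assumes [measurable]: "f \<in> borel_measurable L3" "g \<in> borel_measurable L3"
  shows "bily_hat f g z = bilx_hat (\<lambda>z. f (Sw z)) (\<lambda>z. g (Sw z)) (Sw z)"
proof -
  have "(\<integral>z1. bily_integrand f g z z1 \<partial>L3) = (\<integral>z1. bilx_integrand (\<lambda>z. f (Sw z)) (\<lambda>z. g (Sw z)) (Sw z) (Sw z1) \<partial>L3)"
    by (simp add: bily_integrand_Sw)
  also have "\<dots> = (\<integral>z1. bilx_integrand (\<lambda>z. f (Sw z)) (\<lambda>z. g (Sw z)) (Sw z) z1 \<partial>L3)"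
    by (rule int_Sw) measurable
  finally show ?thesis unfolding bily_hat_def bilx_hat_def lborel3 by (simp add: Sw_def)
qed

lemma bily_defined_Sw:
  assumes [measurable]: "f \<in> borel_measurable L3" "g \<in> borel_measurable L3"
    and "bilx_defined (\<lambda>z. f (Sw z)) (\<lambda>z. g (Sw z))"
  shows "bily_defined f g"
proof -
  have m1: "(\<lambda>z. f (Sw z)) \<in> borel_measurable L3" and m2: "(\<lambda>z. g (Sw z)) \<in> borel_measurable L3"
    by measurable
  have "AE z in L3. integrable L3 (bilx_integrand (\<lambda>z. f (Sw z)) (\<lambda>z. g (Sw z)) z)"
    using assms(3) unfolding bilx_defined_def lborel3 .
  then have "AE z in L3. integrable L3 (bilx_integrand (\<lambda>z. f (Sw z)) (\<lambda>z. g (Sw z)) (Sw z))"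
    by (rule AE_Sw)
  then show ?thesis unfolding bily_defined_def lborel3
  proof (rule eventually_mono)
    fix z assume "integrable L3 (bilx_integrand (\<lambda>z. f (Sw z)) (\<lambda>z. g (Sw z)) (Sw z))"
    then have "integrable L3 (\<lambda>z1. bilx_integrand (\<lambda>z. f (Sw z)) (\<lambda>z. g (Sw z)) (Sw z) (Sw z1))"
      by (subst integrable_Sw[OF bilx_integrand_meas[OF m1 m2]])
    then show "integrable L3 (bily_integrand f g z)"
      by (simp add: bily_integrand_Sw[abs_def])
  qed
qed

lemma Px_Sw: "Px_hat I f = (\<lambda>z. Py_hat I (\<lambda>z. f (Sw z)) (Sw z))"
  by (auto simp: fun_eq_iff Px_hat_def Py_hat_def Sw_def split: prod.splits)

lemma Px_Sw2: "(\<lambda>z. Px_hat I f (Sw z)) = Py_hat I (\<lambda>z. f (Sw z))"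
  by (auto simp: fun_eq_iff Px_hat_def Py_hat_def Sw_def split: prod.splits)

lemma l2sq_Sw:
  assumes [measurable]: "h \<in> borel_measurable L3"
  shows "l2sq (\<lambda>z. h (Sw z)) = l2sq h"
  unfolding l2sq_def lborel3 by (rule nn_Sw) measurable

lemma l2norm_Sw:
  assumes [measurable]: "h \<in> borel_measurable L3"
  shows "l2norm (\<lambda>z. h (Sw z)) = l2norm h"
  unfolding l2norm_def by (simp add: l2sq_Sw)

lemma Xsb_weight_Sw: "Xsb_weight 0 b (Sw z) = Xsb_weight 0 b z"
  by (cases z) (simp add: Xsb_weight_def Sw_def jb2_def algebra_simps)

lemma Xsb_sq_Sw:
  assumes [measurable]: "f \<in> borel_measurable L3"
  shows "Xsb_sq 0 b (\<lambda>z. f (Sw z)) = Xsb_sq 0 b f"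
proof -
  have [measurable]: "Xsb_weight 0 b \<in> borel_measurable L3"
    unfolding Xsb_weight_def[abs_def] jb_def jb2_def by (simp add: case_prod_beta) measurable
  have "Xsb_sq 0 b (\<lambda>z. f (Sw z)) = (\<integral>\<^sup>+z. (\<lambda>z. ennreal ((Xsb_weight 0 b z * cmod (f z))\<^sup>2)) (Sw z) \<partial>L3)"
    unfolding Xsb_sq_def lborel3 by (simp add: Xsb_weight_Sw)
  also have "\<dots> = Xsb_sq 0 b f"
    unfolding Xsb_sq_def lborel3 by (rule nn_Sw) measurable
  finally show ?thesis .
qed


theorem mainTheorem5:
  fixes b :: real
  assumes "b > 1/2"
  shows "\<exists>C>0. \<forall>I a c f g. bounded_interval I a c \<and> in_Xsb 0 b f \<and> in_Xsb 0 b g \<longrightarrow>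
     (bilx_defined (Py_hat I f) g \<and> bilx_defined f (Py_hat I g) \<and> bilx_defined f g \<and>
      l2sq (bilx_hat (Py_hat I f) g) < \<infinity> \<and> l2sq (bilx_hat f (Py_hat I g)) < \<infinity> \<and>
      l2sq (Py_hat I (bilx_hat f g)) < \<infinity> \<and>
      l2norm (bilx_hat (Py_hat I f) g) + l2norm (bilx_hat f (Py_hat I g))
        + l2norm (Py_hat I (bilx_hat f g))
        \<le> C * sqrt (c - a) * Xsb_norm 0 b f * Xsb_norm 0 b g)
   \<and> (bily_defined (Px_hat I f) g \<and> bily_defined f (Px_hat I g) \<and> bily_defined f g \<and>
      l2sq (bily_hat (Px_hat I f) g) < \<infinity> \<and> l2sq (bily_hat f (Px_hat I g)) < \<infinity> \<and>
      l2sq (Px_hat I (bily_hat f g)) < \<infinity> \<and>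
      l2norm (bily_hat (Px_hat I f) g) + l2norm (bily_hat f (Px_hat I g))
        + l2norm (Px_hat I (bily_hat f g))
        \<le> C * sqrt (c - a) * Xsb_norm 0 b f * Xsb_norm 0 b g)"
proof -
  obtain C where C: "C > 0" and H: "\<And>I a c f g. bounded_interval I a c \<and> in_Xsb 0 b f \<and> in_Xsb 0 b g \<Longrightarrow>
     (bilx_defined (Py_hat I f) g \<and> bilx_defined f (Py_hat I g) \<and> bilx_defined f g \<and>
      l2sq (bilx_hat (Py_hat I f) g) < \<infinity> \<and> l2sq (bilx_hat f (Py_hat I g)) < \<infinity> \<and>
      l2sq (Py_hat I (bilx_hat f g)) < \<infinity> \<and>
      l2norm (bilx_hat (Py_hat I f) g) + l2norm (bilx_hat f (Py_hat I g))
        + l2norm (Py_hat I (bilx_hat f g))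
        \<le> C * sqrt (c - a) * Xsb_norm 0 b f * Xsb_norm 0 b g)"
    using x_part[OF assms] by blast
  show ?thesis
  proof (intro exI[of _ C] conjI C allI impI)
    fix I a c f g
    assume asm: "bounded_interval I a c \<and> in_Xsb 0 b f \<and> in_Xsb 0 b g"
    note HX = H[OF asm]
    show "bilx_defined (Py_hat I f) g" "bilx_defined f (Py_hat I g)" "bilx_defined f g"
      "l2sq (bilx_hat (Py_hat I f) g) < \<infinity>" "l2sq (bilx_hat f (Py_hat I g)) < \<infinity>"
      "l2sq (Py_hat I (bilx_hat f g)) < \<infinity>"
      "l2norm (bilx_hat (Py_hat I f) g) + l2norm (bilx_hat f (Py_hat I g)) + l2norm (Py_hat I (bilx_hat f g))
        \<le> C * sqrt (c - a) * Xsb_norm 0 b f * Xsb_norm 0 b g"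
      using HX by auto
    have fm[measurable]: "f \<in> borel_measurable L3" and gm[measurable]: "g \<in> borel_measurable L3"
      using asm by (auto simp: in_Xsb_def intro: meas_L3)
    have I[measurable]: "I \<in> sets borel" using bounded_interval_props asm by auto
    define fS where "fS = (\<lambda>z. f (Sw z))"
    define gS where "gS = (\<lambda>z. g (Sw z))"
    have fSm[measurable]: "fS \<in> borel_measurable L3" and gSm[measurable]: "gS \<in> borel_measurable L3"
      unfolding fS_def gS_def by measurable
    have XfS: "Xsb_sq 0 b fS = Xsb_sq 0 b f" and XgS: "Xsb_sq 0 b gS = Xsb_sq 0 b g"
      unfolding fS_def gS_def by (simp_all add: Xsb_sq_Sw)
    have "in_Xsb 0 b fS" "in_Xsb 0 b gS"
      using asm fSm gSm XfS XgS by (auto simp: in_Xsb_def lborel3)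
    then have HY: "bilx_defined (Py_hat I fS) gS \<and> bilx_defined fS (Py_hat I gS) \<and> bilx_defined fS gS \<and>
      l2sq (bilx_hat (Py_hat I fS) gS) < \<infinity> \<and> l2sq (bilx_hat fS (Py_hat I gS)) < \<infinity> \<and>
      l2sq (Py_hat I (bilx_hat fS gS)) < \<infinity> \<and>
      l2norm (bilx_hat (Py_hat I fS) gS) + l2norm (bilx_hat fS (Py_hat I gS))
        + l2norm (Py_hat I (bilx_hat fS gS))
        \<le> C * sqrt (c - a) * Xsb_norm 0 b fS * Xsb_norm 0 b gS"
      using H asm by blast
    have Pxf: "Px_hat I f = (\<lambda>z. Py_hat I fS (Sw z))" unfolding fS_def by (rule Px_Sw)
    have Pxg: "Px_hat I g = (\<lambda>z. Py_hat I gS (Sw z))" unfolding gS_def by (rule Px_Sw)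
    have Pxfm[measurable]: "Px_hat I f \<in> borel_measurable L3" unfolding Pxf by measurable
    have Pxgm[measurable]: "Px_hat I g \<in> borel_measurable L3" unfolding Pxg by measurable
    have Pxf2: "(\<lambda>z. Px_hat I f (Sw z)) = Py_hat I fS" unfolding fS_def by (rule Px_Sw2)
    have Pxg2: "(\<lambda>z. Px_hat I g (Sw z)) = Py_hat I gS" unfolding gS_def by (rule Px_Sw2)
    show "bily_defined (Px_hat I f) g"
      by (rule bily_defined_Sw[OF Pxfm gm]) (use HY in \<open>simp add: Pxf2 gS_def[symmetric]\<close>)
    show "bily_defined f (Px_hat I g)"
      by (rule bily_defined_Sw[OF fm Pxgm]) (use HY in \<open>simp add: Pxg2 fS_def[symmetric]\<close>)
    show "bily_defined f g"
      by (rule bily_defined_Sw[OF fm gm]) (use HY in \<open>simp add: fS_def[symmetric] gS_def[symmetric]\<close>)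
    have e1: "bily_hat (Px_hat I f) g = (\<lambda>z. bilx_hat (Py_hat I fS) gS (Sw z))"
      using bily_hat_Sw[OF Pxfm gm] by (simp add: fun_eq_iff Pxf2 gS_def[symmetric])
    have e2: "bily_hat f (Px_hat I g) = (\<lambda>z. bilx_hat fS (Py_hat I gS) (Sw z))"
      using bily_hat_Sw[OF fm Pxgm] by (simp add: fun_eq_iff Pxg2 fS_def[symmetric])
    have e3: "Px_hat I (bily_hat f g) = (\<lambda>z. Py_hat I (bilx_hat fS gS) (Sw z))"
    proof -
      have "Px_hat I (bily_hat f g) = (\<lambda>z. Py_hat I (\<lambda>z. bily_hat f g (Sw z)) (Sw z))" by (rule Px_Sw)
      also have "(\<lambda>z. bily_hat f g (Sw z)) = bilx_hat fS gS"
        using bily_hat_Sw[OF fm gm] by (simp add: fun_eq_iff fS_def gS_def)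
      finally show ?thesis .
    qed
    have l1: "l2sq (bily_hat (Px_hat I f) g) = l2sq (bilx_hat (Py_hat I fS) gS)"
      unfolding e1 by (rule l2sq_Sw) measurable
    have l2: "l2sq (bily_hat f (Px_hat I g)) = l2sq (bilx_hat fS (Py_hat I gS))"
      unfolding e2 by (rule l2sq_Sw) measurable
    have l3: "l2sq (Px_hat I (bily_hat f g)) = l2sq (Py_hat I (bilx_hat fS gS))"
      unfolding e3 by (rule l2sq_Sw) measurable
    have n1: "l2norm (bily_hat (Px_hat I f) g) = l2norm (bilx_hat (Py_hat I fS) gS)"
      unfolding l2norm_def l1 ..
    have n2: "l2norm (bily_hat f (Px_hat I g)) = l2norm (bilx_hat fS (Py_hat I gS))"
      unfolding l2norm_def l2 ..
    have n3: "l2norm (Px_hat I (bily_hat f g)) = l2norm (Py_hat I (bilx_hat fS gS))"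
      unfolding l2norm_def l3 ..
    have xn: "Xsb_norm 0 b fS = Xsb_norm 0 b f" "Xsb_norm 0 b gS = Xsb_norm 0 b g"
      by (simp_all add: Xsb_norm_def XfS XgS)
    show "l2sq (bily_hat (Px_hat I f) g) < \<infinity>" "l2sq (bily_hat f (Px_hat I g)) < \<infinity>"
      "l2sq (Px_hat I (bily_hat f g)) < \<infinity>"
      using HY by (simp_all add: l1 l2 l3)
    show "l2norm (bily_hat (Px_hat I f) g) + l2norm (bily_hat f (Px_hat I g)) + l2norm (Px_hat I (bily_hat f g))
        \<le> C * sqrt (c - a) * Xsb_norm 0 b f * Xsb_norm 0 b g"
      using HY unfolding n1 n2 n3 xn by simp
  qed
qed


end
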